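(* Let $(\mathscr C,A,\psi)$ be an entwining structure with $A$ finite dimensional over $K$ such that there exists a normalized cointegral $\gamma=\{\gamma_{X}:A^*\otimes\mathscr C(X,X)\longrightarrow A\}_{X\in Ob(\mathscr C)}$. Then a morphism $\phi:\mathcal M\longrightarrow\mathcal M'$ in ${_A^{\mathscr C}}Ctr(\psi)$ has a section (resp. a retraction) in ${_A^{\mathscr C}}Ctr(\psi)$ if and only if it has a section (resp. a retraction) in ${^{\mathscr C}}Ctr$.
   Context: $K$ is a field, $(U',U):=Hom_K(U',U)$. $\mathscr C$ is a coalgebra with several objects ($\delta_{XYZ}:\mathscr C(X,Z)\to\mathscr C(Y,Z)\otimes\mathscr C(X,Y)$, counits $\epsilon_X$). $(\mathscr C,A,\psi)$ is an entwining structure: $A$ a $K$-algebra with multiplication $\mu_A$ and unit $u_A$, $\psi_{XY}:\mathscr C(X,Y)\otimes A\to A\otimes\mathscr C(X,Y)$, $f\otimes a\mapsto a_\psi\otimes f^\psi$, with $a_\psi\otimes\delta_{XYZ}(f^\psi)=a_{\psi\psi}\otimes f_{Y1}^\psi\otimes f_{Y2}^\psi$, $(ab)_\psi\otimes f^\psi=a_\psi b_\psi\otimes f^{\psi\psi}$, $\psi(f\otimes1)=1\otimes f$, $a_\psi\epsilon_Z(g^\psi)=\epsilon_Z(g)a$. ${^\mathscr C}Ctr$ is the category of left $\mathscr C$-contramodules ($\pi_{XY}:(\mathscr C(X,Y),\mathcal M(Y))\to\mathcal M(X)$, coassociative and counital) and ${_A^{\mathscr C}}Ctr(\psi)$ the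 category of entwined contramodules (contramodules with left $A$-module structures $\mu_X:\mathcal M(X)\to(A,\mathcal M(X))$ satisfying $\mu_X\circ\pi_{XY}=(A,\pi_{XY})\circ(\psi_{XY},\mathcal M(Y))\circ(\mathscr C(X,Y),\mu_Y)$, morphisms objectwise $A$-linear). $coev_A:K\to A\otimes A^*$, $1\mapsto\sum_i a_i\otimes a_i^*$ for a basis $\{a_i\}$ with dual basis $\{a_i^*\}$. A normalized cointegral is a family of linear maps $\gamma_X:A^*\otimes\mathscr C(X,X)\to A$ with: (1) $(A\otimes\psi_{XY})\circ(\psi_{XY}\otimes\gamma_X)\circ(\mathscr C(X,Y)\otimes coev_A\otimes\mathscr C(X,X))\circ\delta_{XXY}=(A\otimes\gamma_Y\otimes\mathscr C(X,Y))\circ(coev_A\otimes\delta_{XYY})$; (2) $(A\otimes\mu_A)\circ(A\otimes\gamma_X\otimes A)\circ(coev_A\otimes\mathscr C(X,X)\otimes A)=(\mu_A\otimes\gamma_X)\circ(A\otimes coev_A\otimes\mathscr C(X,X))\circ\psi_{XX}$; (3) $\mu_A\circ(A\otimes\gamma_X)\circ(coev_A\otimes\mathscr C(X,X))=u_A\circ\epsilon_X$. *)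

theory Defs
  imports Complex_Main "HOL-Library.Function_Algebras"
begin

text \<open>A K-vector space is a subspace U of an ambient type carrying a scalar
multiplication s (library locale vector_space). Hom_K(U,V) is represented by
functions that are K-linear on U, map U into V and are zero outside U
(so that each linear map has a unique representative).\<close>

definition lin_on ::
  "('k::field \<Rightarrow> 'u::ab_group_add \<Rightarrow> 'u) \<Rightarrow> ('k \<Rightarrow> 'v::ab_group_add \<Rightarrow> 'v)
   \<Rightarrow> 'u set \<Rightarrow> 'v set \<Rightarrow> ('u \<Rightarrow> 'v) \<Rightarrow> bool" where
  "lin_on s1 s2 U V f \<longleftrightarrow> (\<forall>x\<in>U. f x \<in> V) \<and> (\<forall>x\<in>U. \<forall>y\<in>U. f (x + y) = f x + f y)
      \<and> (\<forall>c. \<forall>x\<in>U. f (s1 c x) = s2 c (f x))"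

definition LHom ::
  "('k::field \<Rightarrow> 'u::ab_group_add \<Rightarrow> 'u) \<Rightarrow> ('k \<Rightarrow> 'v::ab_group_add \<Rightarrow> 'v)
   \<Rightarrow> 'u set \<Rightarrow> 'v set \<Rightarrow> ('u \<Rightarrow> 'v) set" where
  "LHom s1 s2 U V = {f. lin_on s1 s2 U V f \<and> (\<forall>x. x \<notin> U \<longrightarrow> f x = 0)}"

definition fscale :: "('k \<Rightarrow> 'v \<Rightarrow> 'v) \<Rightarrow> 'k \<Rightarrow> ('u \<Rightarrow> 'v) \<Rightarrow> ('u \<Rightarrow> 'v)" where
  "fscale s c h = (\<lambda>x. s c (h x))"

definition restrict0 :: "'u set \<Rightarrow> ('u \<Rightarrow> 'v::zero) \<Rightarrow> 'u \<Rightarrow> 'v" where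
  "restrict0 U h = (\<lambda>x. if x \<in> U then h x else 0)"

text \<open>An element of U \<otimes> V (resp. U \<otimes> V \<otimes> W) is represented by a finite formal sum,
i.e. a list of pairs (triples) of vectors. Two formal sums represent the same
tensor iff every bilinear (trilinear) functional takes the same value on them
(universal property of the tensor product over a field).\<close>

definition bilin_on ::
  "('k::field \<Rightarrow> 'u::ab_group_add \<Rightarrow> 'u) \<Rightarrow> ('k \<Rightarrow> 'v::ab_group_add \<Rightarrow> 'v)
   \<Rightarrow> 'u set \<Rightarrow> 'v set \<Rightarrow> ('u \<Rightarrow> 'v \<Rightarrow> 'k) \<Rightarrow> bool" where
  "bilin_on s1 s2 U V \<beta> \<longleftrightarrow>
     (\<forall>u\<in>U. lin_on s2 (*) V UNIV (\<beta> u)) \<and> (\<forall>v\<in>V. lin_on s1 (*) U UNIV (\<lambda>u. \<beta> u v))"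

definition trilin_on ::
  "('k::field \<Rightarrow> 'u::ab_group_add \<Rightarrow> 'u) \<Rightarrow> ('k \<Rightarrow> 'v::ab_group_add \<Rightarrow> 'v)
   \<Rightarrow> ('k \<Rightarrow> 'w::ab_group_add \<Rightarrow> 'w)
   \<Rightarrow> 'u set \<Rightarrow> 'v set \<Rightarrow> 'w set \<Rightarrow> ('u \<Rightarrow> 'v \<Rightarrow> 'w \<Rightarrow> 'k) \<Rightarrow> bool" where
  "trilin_on s1 s2 s3 U V W \<tau> \<longleftrightarrow>
     (\<forall>u\<in>U. \<forall>v\<in>V. lin_on s3 (*) W UNIV (\<tau> u v)) \<and>
     (\<forall>u\<in>U. \<forall>w\<in>W. lin_on s2 (*) V UNIV (\<lambda>v. \<tau> u v w)) \<and>
     (\<forall>v\<in>V. \<forall>w\<in>W. lin_on s1 (*) U UNIV (\<lambda>u. \<tau> u v w))"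

definition teq2 ::
  "('k::field \<Rightarrow> 'u::ab_group_add \<Rightarrow> 'u) \<Rightarrow> ('k \<Rightarrow> 'v::ab_group_add \<Rightarrow> 'v)
   \<Rightarrow> 'u set \<Rightarrow> 'v set \<Rightarrow> ('u \<times> 'v) list \<Rightarrow> ('u \<times> 'v) list \<Rightarrow> bool" where
  "teq2 s1 s2 U V xs ys \<longleftrightarrow> set xs \<subseteq> U \<times> V \<and> set ys \<subseteq> U \<times> V \<and>
     (\<forall>\<beta>. bilin_on s1 s2 U V \<beta> \<longrightarrow>
        (\<Sum>(u,v)\<leftarrow>xs. \<beta> u v) = (\<Sum>(u,v)\<leftarrow>ys. \<beta> u v))"

definition teq3 ::
  "('k::field \<Rightarrow> 'u::ab_group_add \<Rightarrow> 'u) \<Rightarrow> ('k \<Rightarrow> 'v::ab_group_add \<Rightarrow> 'v)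
   \<Rightarrow> ('k \<Rightarrow> 'w::ab_group_add \<Rightarrow> 'w)
   \<Rightarrow> 'u set \<Rightarrow> 'v set \<Rightarrow> 'w set \<Rightarrow> ('u \<times> 'v \<times> 'w) list \<Rightarrow> ('u \<times> 'v \<times> 'w) list \<Rightarrow> bool" where
  "teq3 s1 s2 s3 U V W xs ys \<longleftrightarrow> set xs \<subseteq> U \<times> V \<times> W \<and> set ys \<subseteq> U \<times> V \<times> W \<and>
     (\<forall>\<tau>. trilin_on s1 s2 s3 U V W \<tau> \<longrightarrow>
        (\<Sum>(u,v,w)\<leftarrow>xs. \<tau> u v w) = (\<Sum>(u,v,w)\<leftarrow>ys. \<tau> u v w))"

text \<open>a map U \<times> V \<rightarrow> X \<otimes> Y (formal sums) that is bilinear up to equality of tensors,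
i.e. a linear map U \<otimes> V \<rightarrow> X \<otimes> Y\<close>
definition tmap2 ::
  "('k::field \<Rightarrow> 'u::ab_group_add \<Rightarrow> 'u) \<Rightarrow> ('k \<Rightarrow> 'v::ab_group_add \<Rightarrow> 'v)
   \<Rightarrow> ('k \<Rightarrow> 'x::ab_group_add \<Rightarrow> 'x) \<Rightarrow> ('k \<Rightarrow> 'y::ab_group_add \<Rightarrow> 'y)
   \<Rightarrow> 'u set \<Rightarrow> 'v set \<Rightarrow> 'x set \<Rightarrow> 'y set \<Rightarrow> ('u \<Rightarrow> 'v \<Rightarrow> ('x \<times> 'y) list) \<Rightarrow> bool" where
  "tmap2 s1 s2 s3 s4 U V X Y F \<longleftrightarrow>
     (\<forall>u\<in>U. \<forall>v\<in>V. set (F u v) \<subseteq> X \<times> Y) \<and>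
     (\<forall>u\<in>U. \<forall>u'\<in>U. \<forall>v\<in>V. teq2 s3 s4 X Y (F (u + u') v) (F u v @ F u' v)) \<and>
     (\<forall>u\<in>U. \<forall>v\<in>V. \<forall>v'\<in>V. teq2 s3 s4 X Y (F u (v + v')) (F u v @ F u v')) \<and>
     (\<forall>c. \<forall>u\<in>U. \<forall>v\<in>V. teq2 s3 s4 X Y (F (s1 c u) v) (map (\<lambda>(x,y). (s3 c x, y)) (F u v))) \<and>
     (\<forall>c. \<forall>u\<in>U. \<forall>v\<in>V. teq2 s3 s4 X Y (F u (s2 c v)) (map (\<lambda>(x,y). (s3 c x, y)) (F u v)))"

definition tmap1 ::
  "('k::field \<Rightarrow> 'u::ab_group_add \<Rightarrow> 'u)
   \<Rightarrow> ('k \<Rightarrow> 'x::ab_group_add \<Rightarrow> 'x) \<Rightarrow> ('k \<Rightarrow> 'y::ab_group_add \<Rightarrow> 'y)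
   \<Rightarrow> 'u set \<Rightarrow> 'x set \<Rightarrow> 'y set \<Rightarrow> ('u \<Rightarrow> ('x \<times> 'y) list) \<Rightarrow> bool" where
  "tmap1 s1 s3 s4 U X Y F \<longleftrightarrow>
     (\<forall>u\<in>U. set (F u) \<subseteq> X \<times> Y) \<and>
     (\<forall>u\<in>U. \<forall>u'\<in>U. teq2 s3 s4 X Y (F (u + u')) (F u @ F u')) \<and>
     (\<forall>c. \<forall>u\<in>U. teq2 s3 s4 X Y (F (s1 c u)) (map (\<lambda>(x,y). (s3 c x, y)) (F u)))"

text \<open>Objects are the elements of the type 'o; C X Y \<subseteq> 'c is the space \<C>(X,Y);
delta X Y Z : \<C>(X,Z) \<rightarrow> \<C>(Y,Z) \<otimes> \<C>(X,Y); eps X : \<C>(X,X) \<rightarrow> K.\<close>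

definition coalgebra ::
  "('k::field \<Rightarrow> 'c::ab_group_add \<Rightarrow> 'c) \<Rightarrow> ('o \<Rightarrow> 'o \<Rightarrow> 'c set)
   \<Rightarrow> ('o \<Rightarrow> 'o \<Rightarrow> 'o \<Rightarrow> 'c \<Rightarrow> ('c \<times> 'c) list) \<Rightarrow> ('o \<Rightarrow> 'c \<Rightarrow> 'k) \<Rightarrow> bool" where
  "coalgebra sC C delta eps \<longleftrightarrow>
     vector_space sC \<and>
     (\<forall>X Y. module.subspace sC (C X Y)) \<and>
     (\<forall>X Y Z. tmap1 sC sC sC (C X Z) (C Y Z) (C X Y) (delta X Y Z)) \<and>
     (\<forall>X. lin_on sC (*) (C X X) UNIV (eps X)) \<and>
     (\<forall>X Y Z W. \<forall>f\<in>C X W.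
        teq3 sC sC sC (C Z W) (C Y Z) (C X Y)
          [(a, b, c). (g, c) \<leftarrow> delta X Y W f, (a, b) \<leftarrow> delta Y Z W g]
          [(a, b, c). (a, h) \<leftarrow> delta X Z W f, (b, c) \<leftarrow> delta X Y Z h]) \<and>
     (\<forall>X Y. \<forall>f\<in>C X Y. (\<Sum>(f1, f2)\<leftarrow>delta X Y Y f. sC (eps Y f1) f2) = f) \<and>
     (\<forall>X Y. \<forall>f\<in>C X Y. (\<Sum>(f1, f2)\<leftarrow>delta X X Y f. sC (eps X f2) f1) = f)"

text \<open>A K-algebra A is the type 'a (a ring with unit) with a K-vector space structure sA
making the multiplication K-bilinear.\<close>

definition kalgebra :: "('k::field \<Rightarrow> 'a::ring_1 \<Rightarrow> 'a) \<Rightarrow> bool" where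
  "kalgebra sA \<longleftrightarrow> vector_space sA \<and>
     (\<forall>c a b. sA c (a * b) = sA c a * b) \<and> (\<forall>c a b. sA c (a * b) = a * sA c b)"

definition findim :: "('k::field \<Rightarrow> 'a::ab_group_add \<Rightarrow> 'a) \<Rightarrow> bool" where
  "findim sA \<longleftrightarrow> (\<exists>B. finite_dimensional_vector_space sA B)"

text \<open>psi X Y f a is (a formal sum representing) \<psi>_XY(f \<otimes> a) \<in> A \<otimes> \<C>(X,Y).\<close>

definition entwining ::
  "('k::field \<Rightarrow> 'c::ab_group_add \<Rightarrow> 'c) \<Rightarrow> ('o \<Rightarrow> 'o \<Rightarrow> 'c set)
   \<Rightarrow> ('o \<Rightarrow> 'o \<Rightarrow> 'o \<Rightarrow> 'c \<Rightarrow> ('c \<times> 'c) list) \<Rightarrow> ('o \<Rightarrow> 'c \<Rightarrow> 'k)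
   \<Rightarrow> ('k \<Rightarrow> 'a::ring_1 \<Rightarrow> 'a) \<Rightarrow> ('o \<Rightarrow> 'o \<Rightarrow> 'c \<Rightarrow> 'a \<Rightarrow> ('a \<times> 'c) list) \<Rightarrow> bool" where
  "entwining sC C delta eps sA psi \<longleftrightarrow>
     coalgebra sC C delta eps \<and> kalgebra sA \<and>
     (\<forall>X Y. tmap2 sC sA sA sC (C X Y) UNIV UNIV (C X Y) (psi X Y)) \<and>
     (\<forall>X Y Z. \<forall>f\<in>C X Z. \<forall>a.
        teq3 sA sC sC UNIV (C Y Z) (C X Y)
          [(b, g1, g2). (b, g) \<leftarrow> psi X Z f a, (g1, g2) \<leftarrow> delta X Y Z g]
          [(b2, h1, h2). (f1, f2) \<leftarrow> delta X Y Z f, (b1, h2) \<leftarrow> psi X Y f2 a,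
                         (b2, h1) \<leftarrow> psi Y Z f1 b1]) \<and>
     (\<forall>X Y. \<forall>f\<in>C X Y. \<forall>a b.
        teq2 sA sC UNIV (C X Y) (psi X Y f (a * b))
          [(a' * b', f''). (b', f') \<leftarrow> psi X Y f b, (a', f'') \<leftarrow> psi X Y f' a]) \<and>
     (\<forall>X Y. \<forall>f\<in>C X Y. teq2 sA sC UNIV (C X Y) (psi X Y f 1) [(1, f)]) \<and>
     (\<forall>Z. \<forall>g\<in>C Z Z. \<forall>a. (\<Sum>(b, h)\<leftarrow>psi Z Z g a. sA (eps Z h) b) = sA (eps Z g) a)"

definition Adual :: "('k::field \<Rightarrow> 'a::ab_group_add \<Rightarrow> 'a) \<Rightarrow> ('a \<Rightarrow> 'k) set" where
  "Adual sA = {\<alpha>. lin_on sA (*) UNIV UNIV \<alpha>}"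

text \<open>coev_A(1) = \<Sum>_i a_i \<otimes> a_i^* for a (chosen) finite basis {a_i} of A with dual basis
{a_i^*}; as an element of A \<otimes> A^* it does not depend on the choice.\<close>

definition coev :: "('k::field \<Rightarrow> 'a::ab_group_add \<Rightarrow> 'a) \<Rightarrow> ('a \<times> ('a \<Rightarrow> 'k)) list" where
  "coev sA = (let B = (SOME B. finite_dimensional_vector_space sA B);
                  bs = (SOME bs. distinct bs \<and> set bs = B)
              in map (\<lambda>b. (b, \<lambda>v. module.representation sA B v b)) bs)"

text \<open>gamma X \<alpha> f = \<gamma>_X(\<alpha> \<otimes> f)\<close>

definition normalized_cointegral ::
  "('k::field \<Rightarrow> 'c::ab_group_add \<Rightarrow> 'c) \<Rightarrow> ('o \<Rightarrow> 'o \<Rightarrow> 'c set)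
   \<Rightarrow> ('o \<Rightarrow> 'o \<Rightarrow> 'o \<Rightarrow> 'c \<Rightarrow> ('c \<times> 'c) list) \<Rightarrow> ('o \<Rightarrow> 'c \<Rightarrow> 'k)
   \<Rightarrow> ('k \<Rightarrow> 'a::ring_1 \<Rightarrow> 'a) \<Rightarrow> ('o \<Rightarrow> 'o \<Rightarrow> 'c \<Rightarrow> 'a \<Rightarrow> ('a \<times> 'c) list)
   \<Rightarrow> ('o \<Rightarrow> ('a \<Rightarrow> 'k) \<Rightarrow> 'c \<Rightarrow> 'a) \<Rightarrow> bool" where
  "normalized_cointegral sC C delta eps sA psi gamma \<longleftrightarrow>
     (\<forall>X. (\<forall>\<alpha>\<in>Adual sA. lin_on sC sA (C X X) UNIV (gamma X \<alpha>)) \<and>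
          (\<forall>f\<in>C X X. lin_on (fscale (*)) sA (Adual sA) UNIV (\<lambda>\<alpha>. gamma X \<alpha> f))) \<and>
     (\<forall>X Y. \<forall>f\<in>C X Y.
        teq3 sA sA sC UNIV UNIV (C X Y)
          [(b, d, h). (f1, f2) \<leftarrow> delta X X Y f, (ai, ai') \<leftarrow> coev sA,
                      (b, g) \<leftarrow> psi X Y f1 ai, (d, h) \<leftarrow> psi X Y g (gamma X ai' f2)]
          [(ai, gamma Y ai' f1, f2). (ai, ai') \<leftarrow> coev sA, (f1, f2) \<leftarrow> delta X Y Y f]) \<and>
     (\<forall>X. \<forall>f\<in>C X X. \<forall>a.
        teq2 sA sA UNIV UNIV
          [(ai, gamma X ai' f * a). (ai, ai') \<leftarrow> coev sA]
          [(b * ai, gamma X ai' g). (b, g) \<leftarrow> psi X X f a, (ai, ai') \<leftarrow> coev sA]) \<and>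
     (\<forall>X. \<forall>f\<in>C X X. (\<Sum>(ai, ai')\<leftarrow>coev sA. ai * gamma X ai' f) = sA (eps X f) 1)"

text \<open>A left \<C>-contramodule: spaces M X \<subseteq> 'm and structure maps
pr X Y : Hom(\<C>(X,Y), M(Y)) \<rightarrow> M(X).\<close>

definition contramodule ::
  "('k::field \<Rightarrow> 'c::ab_group_add \<Rightarrow> 'c) \<Rightarrow> ('o \<Rightarrow> 'o \<Rightarrow> 'c set)
   \<Rightarrow> ('o \<Rightarrow> 'o \<Rightarrow> 'o \<Rightarrow> 'c \<Rightarrow> ('c \<times> 'c) list) \<Rightarrow> ('o \<Rightarrow> 'c \<Rightarrow> 'k)
   \<Rightarrow> ('k \<Rightarrow> 'm::ab_group_add \<Rightarrow> 'm) \<Rightarrow> ('o \<Rightarrow> 'm set)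
   \<Rightarrow> ('o \<Rightarrow> 'o \<Rightarrow> ('c \<Rightarrow> 'm) \<Rightarrow> 'm) \<Rightarrow> bool" where
  "contramodule sC C delta eps sM M pr \<longleftrightarrow>
     vector_space sM \<and> (\<forall>X. module.subspace sM (M X)) \<and>
     (\<forall>X Y. lin_on (fscale sM) sM (LHom sC sM (C X Y) (M Y)) (M X) (pr X Y)) \<and>
     (\<forall>X Y Z. \<forall>g\<in>LHom sC (fscale sM) (C X Y) (LHom sC sM (C Y Z) (M Z)).
        pr X Y (restrict0 (C X Y) (\<lambda>f. pr Y Z (g f))) =
        pr X Z (restrict0 (C X Z) (\<lambda>f. \<Sum>(f1, f2)\<leftarrow>delta X Y Z f. g f2 f1))) \<and>
     (\<forall>X. \<forall>m\<in>M X. pr X X (restrict0 (C X X) (\<lambda>f. sM (eps X f) m)) = m)"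

definition ctr_morphism ::
  "('k::field \<Rightarrow> 'c::ab_group_add \<Rightarrow> 'c) \<Rightarrow> ('o \<Rightarrow> 'o \<Rightarrow> 'c set)
   \<Rightarrow> ('k \<Rightarrow> 'm::ab_group_add \<Rightarrow> 'm) \<Rightarrow> ('o \<Rightarrow> 'm set) \<Rightarrow> ('o \<Rightarrow> 'o \<Rightarrow> ('c \<Rightarrow> 'm) \<Rightarrow> 'm)
   \<Rightarrow> ('k \<Rightarrow> 'n::ab_group_add \<Rightarrow> 'n) \<Rightarrow> ('o \<Rightarrow> 'n set) \<Rightarrow> ('o \<Rightarrow> 'o \<Rightarrow> ('c \<Rightarrow> 'n) \<Rightarrow> 'n)
   \<Rightarrow> ('o \<Rightarrow> 'm \<Rightarrow> 'n) \<Rightarrow> bool" where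
  "ctr_morphism sC C sM M pr sN N pr' phi \<longleftrightarrow>
     (\<forall>X. phi X \<in> LHom sM sN (M X) (N X)) \<and>
     (\<forall>X Y. \<forall>g\<in>LHom sC sM (C X Y) (M Y).
        phi X (pr X Y g) = pr' X Y (restrict0 (C X Y) (\<lambda>f. phi Y (g f))))"

text \<open>Entwined contramodules: act X a m = \<mu>_X(m)(a).\<close>

definition entwined_contramodule ::
  "('k::field \<Rightarrow> 'c::ab_group_add \<Rightarrow> 'c) \<Rightarrow> ('o \<Rightarrow> 'o \<Rightarrow> 'c set)
   \<Rightarrow> ('o \<Rightarrow> 'o \<Rightarrow> 'o \<Rightarrow> 'c \<Rightarrow> ('c \<times> 'c) list) \<Rightarrow> ('o \<Rightarrow> 'c \<Rightarrow> 'k)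
   \<Rightarrow> ('k \<Rightarrow> 'a::ring_1 \<Rightarrow> 'a) \<Rightarrow> ('o \<Rightarrow> 'o \<Rightarrow> 'c \<Rightarrow> 'a \<Rightarrow> ('a \<times> 'c) list)
   \<Rightarrow> ('k \<Rightarrow> 'm::ab_group_add \<Rightarrow> 'm) \<Rightarrow> ('o \<Rightarrow> 'm set)
   \<Rightarrow> ('o \<Rightarrow> 'o \<Rightarrow> ('c \<Rightarrow> 'm) \<Rightarrow> 'm) \<Rightarrow> ('o \<Rightarrow> 'a \<Rightarrow> 'm \<Rightarrow> 'm) \<Rightarrow> bool" where
  "entwined_contramodule sC C delta eps sA psi sM M pr act \<longleftrightarrow>
     contramodule sC C delta eps sM M pr \<and>
     (\<forall>X. (\<forall>m\<in>M X. lin_on sA sM UNIV (M X) (\<lambda>a. act X a m)) \<and>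
          (\<forall>a. lin_on sM sM (M X) (M X) (act X a)) \<and>
          (\<forall>m\<in>M X. act X 1 m = m) \<and>
          (\<forall>a b. \<forall>m\<in>M X. act X (a * b) m = act X a (act X b m))) \<and>
     (\<forall>X Y. \<forall>g\<in>LHom sC sM (C X Y) (M Y). \<forall>a.
        act X a (pr X Y g) =
        pr X Y (restrict0 (C X Y) (\<lambda>f. \<Sum>(b, h)\<leftarrow>psi X Y f a. act Y b (g h))))"

definition entwined_morphism ::
  "('k::field \<Rightarrow> 'c::ab_group_add \<Rightarrow> 'c) \<Rightarrow> ('o \<Rightarrow> 'o \<Rightarrow> 'c set)
   \<Rightarrow> ('k \<Rightarrow> 'm::ab_group_add \<Rightarrow> 'm) \<Rightarrow> ('o \<Rightarrow> 'm set) \<Rightarrow> ('o \<Rightarrow> 'o \<Rightarrow> ('c \<Rightarrow> 'm) \<Rightarrow> 'm)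
   \<Rightarrow> ('o \<Rightarrow> 'a \<Rightarrow> 'm \<Rightarrow> 'm)
   \<Rightarrow> ('k \<Rightarrow> 'n::ab_group_add \<Rightarrow> 'n) \<Rightarrow> ('o \<Rightarrow> 'n set) \<Rightarrow> ('o \<Rightarrow> 'o \<Rightarrow> ('c \<Rightarrow> 'n) \<Rightarrow> 'n)
   \<Rightarrow> ('o \<Rightarrow> 'a \<Rightarrow> 'n \<Rightarrow> 'n) \<Rightarrow> ('o \<Rightarrow> 'm \<Rightarrow> 'n) \<Rightarrow> bool" where
  "entwined_morphism sC C sM M pr act sN N pr' act' phi \<longleftrightarrow>
     ctr_morphism sC C sM M pr sN N pr' phi \<and>
     (\<forall>X a. \<forall>m\<in>M X. phi X (act X a m) = act' X a (phi X m))"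

end

theory Submission
  imports Defs
begin

lemma sum_list_in:
  assumes "0 \<in> S" "\<forall>x\<in>S. \<forall>y\<in>S. x + y \<in> S" "\<forall>x\<in>set xs. F x \<in> S"
  shows "(\<Sum>x\<leftarrow>xs. F x) \<in> S"
  using assms(3) by (induction xs) (auto simp: assms(1,2))

lemma additive_sum_list:
  fixes f :: "'a::ab_group_add \<Rightarrow> 'b::ab_group_add"
  assumes "\<forall>x\<in>S. \<forall>y\<in>S. f (x + y) = f x + f y" "0 \<in> S" "\<forall>x\<in>S. \<forall>y\<in>S. x + y \<in> S"
    "\<forall>x\<in>set xs. F x \<in> S"
  shows "f (\<Sum>x\<leftarrow>xs. F x) = (\<Sum>x\<leftarrow>xs. f (F x))"
  using assms(4)
proof (induction xs)
  case Nil
  have "f (0 + 0) = f 0 + f 0" using assms(1,2) by blast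
  then have "f 0 + 0 = f 0 + f 0" by simp
  then have "0 = f 0" by (rule add_left_imp_eq)
  then show ?case by simp
next
  case (Cons a xs)
  have "(\<Sum>x\<leftarrow>xs. F x) \<in> S" using sum_list_in[OF assms(2,3)] Cons by auto
  then show ?case using Cons assms(1) by auto
qed

lemma scale_sum_list:
  assumes "vector_space s"
  shows "s c (\<Sum>x\<leftarrow>xs. F x) = (\<Sum>x\<leftarrow>xs. s c (F x))"
proof -
  interpret module s using assms by (simp add: module_iff_vector_space)
  show ?thesis by (induction xs) (auto simp: scale_right_distrib)
qed

lemma sum_list_swap:
  "(\<Sum>x\<leftarrow>xs. \<Sum>y\<leftarrow>ys. f x y) = (\<Sum>y\<leftarrow>ys. \<Sum>x\<leftarrow>xs. (f x y :: 'b::ab_group_add))"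
  by (induction xs) (auto simp: sum_list_addf)

lemma separation:
  assumes vs: "vector_space s"
    and h: "\<forall>l. lin_on s (*) UNIV UNIV l \<longrightarrow> l x = l y"
  shows "x = y"
proof -
  interpret vector_space s by fact
  obtain B where B0: "B \<subseteq> UNIV" and B: "independent B" "UNIV \<subseteq> span B" "card B = dim UNIV"
    by (rule basis_exists[of UNIV])
  have spB: "span B = UNIV" using B by auto
  have lin: "lin_on s (*) UNIV UNIV (\<lambda>v. representation B v b)" for b
  proof -
    interpret L: Vector_Spaces.linear s "(*)" "\<lambda>v. representation B v b"
      by (rule linear_representation[OF B(1) spB])
    show ?thesis unfolding lin_on_def by (simp add: L.add L.scale)
  qed
  have "representation B x b = representation B y b" for b
    using h lin[of b] by blast
  then have eq: "representation B x = representation B y" by (rule ext)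
  have "x = (\<Sum>b | representation B x b \<noteq> 0. s (representation B x b) b)"
    using sum_nonzero_representation_eq[OF B(1), of x] spB by simp
  also have "\<dots> = (\<Sum>b | representation B y b \<noteq> 0. s (representation B y b) b)"
    by (simp only: eq)
  also have "\<dots> = y"
    using sum_nonzero_representation_eq[OF B(1), of y] spB by simp
  finally show ?thesis .
qed

lemma lin_sum_list_UNIV:
  assumes "lin_on s (*) UNIV UNIV l"
  shows "l (\<Sum>x\<leftarrow>xs. F x) = (\<Sum>x\<leftarrow>xs. l (F x))"
  using assms additive_sum_list[of UNIV l xs F] unfolding lin_on_def by auto

lemma teq2_vec:
  assumes teq: "teq2 s1 s2 U V xs ys" and vs: "vector_space sW"
    and l2: "\<forall>u\<in>U. \<forall>v\<in>V. \<forall>v'\<in>V. F u (v + v') = F u v + F u v'"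
    and h2: "\<forall>u\<in>U. \<forall>v\<in>V. \<forall>c. F u (s2 c v) = sW c (F u v)"
    and l1: "\<forall>u\<in>U. \<forall>u'\<in>U. \<forall>v\<in>V. F (u + u') v = F u v + F u' v"
    and h1: "\<forall>u\<in>U. \<forall>v\<in>V. \<forall>c. F (s1 c u) v = sW c (F u v)"
  shows "(\<Sum>(u,v)\<leftarrow>xs. F u v) = (\<Sum>(u,v)\<leftarrow>ys. F u v)"
proof (rule separation[OF vs], intro allI impI)
  fix l assume l: "lin_on sW (*) UNIV UNIV l"
  have ladd: "\<And>a b. l (a + b) = l a + l b" and lsc: "\<And>c a. l (sW c a) = c * l a"
    using l unfolding lin_on_def by auto
  have bl: "bilin_on s1 s2 U V (\<lambda>u v. l (F u v))"
    unfolding bilin_on_def lin_on_def by (simp add: l2 h2 l1 h1 ladd lsc)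
  have "l (\<Sum>(u,v)\<leftarrow>xs. F u v) = (\<Sum>(u,v)\<leftarrow>xs. l (F u v))"
    using lin_sum_list_UNIV[OF l, of "\<lambda>(u,v). F u v" xs] by (simp add: case_prod_unfold)
  also have "\<dots> = (\<Sum>(u,v)\<leftarrow>ys. l (F u v))"
  proof -
    have "\<forall>\<beta>. bilin_on s1 s2 U V \<beta> \<longrightarrow>
        (\<Sum>(u,v)\<leftarrow>xs. \<beta> u v) = (\<Sum>(u,v)\<leftarrow>ys. \<beta> u v)"
      using teq unfolding teq2_def by (elim conjE)
    then show ?thesis using bl by (elim allE[where x="\<lambda>u v. l (F u v)"]) (erule mp)
  qed
  also have "\<dots> = l (\<Sum>(u,v)\<leftarrow>ys. F u v)"
    using lin_sum_list_UNIV[OF l, of "\<lambda>(u,v). F u v" ys] by (simp add: case_prod_unfold)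
  finally show "l (\<Sum>(u,v)\<leftarrow>xs. F u v) = l (\<Sum>(u,v)\<leftarrow>ys. F u v)" .
qed

lemma teq3_vec:
  assumes teq: "teq3 s1 s2 s3 U V W xs ys" and vs: "vector_space sX"
    and l3: "\<forall>u\<in>U. \<forall>v\<in>V. \<forall>w\<in>W. \<forall>w'\<in>W. F u v (w + w') = F u v w + F u v w'"
    and h3: "\<forall>u\<in>U. \<forall>v\<in>V. \<forall>w\<in>W. \<forall>c. F u v (s3 c w) = sX c (F u v w)"
    and l2: "\<forall>u\<in>U. \<forall>v\<in>V. \<forall>v'\<in>V. \<forall>w\<in>W. F u (v + v') w = F u v w + F u v' w"
    and h2: "\<forall>u\<in>U. \<forall>v\<in>V. \<forall>w\<in>W. \<forall>c. F u (s2 c v) w = sX c (F u v w)"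
    and l1: "\<forall>u\<in>U. \<forall>u'\<in>U. \<forall>v\<in>V. \<forall>w\<in>W. F (u + u') v w = F u v w + F u' v w"
    and h1: "\<forall>u\<in>U. \<forall>v\<in>V. \<forall>w\<in>W. \<forall>c. F (s1 c u) v w = sX c (F u v w)"
  shows "(\<Sum>(u,v,w)\<leftarrow>xs. F u v w) = (\<Sum>(u,v,w)\<leftarrow>ys. F u v w)"
proof (rule separation[OF vs], intro allI impI)
  fix l assume l: "lin_on sX (*) UNIV UNIV l"
  have ladd: "\<And>a b. l (a + b) = l a + l b" and lsc: "\<And>c a. l (sX c a) = c * l a"
    using l unfolding lin_on_def by auto
  have bl: "trilin_on s1 s2 s3 U V W (\<lambda>u v w. l (F u v w))"
    unfolding trilin_on_def lin_on_def by (simp add: l3 h3 l2 h2 l1 h1 ladd lsc)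
  have "l (\<Sum>(u,v,w)\<leftarrow>xs. F u v w) = (\<Sum>(u,v,w)\<leftarrow>xs. l (F u v w))"
    using lin_sum_list_UNIV[OF l, of "\<lambda>(u,v,w). F u v w" xs] by (simp add: case_prod_unfold)
  also have "\<dots> = (\<Sum>(u,v,w)\<leftarrow>ys. l (F u v w))"
  proof -
    have "\<forall>\<tau>. trilin_on s1 s2 s3 U V W \<tau> \<longrightarrow>
        (\<Sum>(u,v,w)\<leftarrow>xs. \<tau> u v w) = (\<Sum>(u,v,w)\<leftarrow>ys. \<tau> u v w)"
      using teq unfolding teq3_def by (elim conjE)
    then show ?thesis using bl by (elim allE[where x="\<lambda>u v w. l (F u v w)"]) (erule mp)
  qed
  also have "\<dots> = l (\<Sum>(u,v,w)\<leftarrow>ys. F u v w)"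
    using lin_sum_list_UNIV[OF l, of "\<lambda>(u,v,w). F u v w" ys] by (simp add: case_prod_unfold)
  finally show "l (\<Sum>(u,v,w)\<leftarrow>xs. F u v w) = l (\<Sum>(u,v,w)\<leftarrow>ys. F u v w)" .
qed

lemma lin_on_comp:
  "lin_on s1 s2 U V f \<Longrightarrow> lin_on s2 s3 V W g \<Longrightarrow> lin_on s1 s3 U W (\<lambda>x. g (f x))"
  unfolding lin_on_def by auto

lemma lin_on_sum_list:
  assumes vs: "vector_space s2" and z: "0 \<in> V" and cl: "\<forall>x\<in>V. \<forall>y\<in>V. x + y \<in> V"
    and F: "\<forall>i\<in>set xs. lin_on s1 s2 U V (F i)"
  shows "lin_on s1 s2 U V (\<lambda>u. \<Sum>i\<leftarrow>xs. F i u)"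
  using F
proof (induction xs)
  case Nil
  interpret module s2 using vs by (simp add: module_iff_vector_space)
  show ?case using z unfolding lin_on_def by simp
next
  case (Cons a xs)
  interpret module s2 using vs by (simp add: module_iff_vector_space)
  have a: "lin_on s1 s2 U V (F a)" and r: "lin_on s1 s2 U V (\<lambda>u. \<Sum>i\<leftarrow>xs. F i u)"
    using Cons by auto
  show ?case using a r cl unfolding lin_on_def by (auto simp: algebra_simps scale_right_distrib)
qed

lemma LHom_restrict0:
  assumes "lin_on s1 s2 U V h" "\<forall>x\<in>U. \<forall>y\<in>U. x + y \<in> U" "\<forall>c. \<forall>x\<in>U. s1 c x \<in> U"
  shows "restrict0 U h \<in> LHom s1 s2 U V"
  using assms unfolding LHom_def lin_on_def restrict0_def by auto

lemma LHom_lin: "g \<in> LHom s1 s2 U V \<Longrightarrow> lin_on s1 s2 U V g"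
  unfolding LHom_def by auto

lemma LHom_out: "g \<in> LHom s1 s2 U V \<Longrightarrow> x \<notin> U \<Longrightarrow> g x = 0"
  unfolding LHom_def by auto

lemma LHom_in: "g \<in> LHom s1 s2 U V \<Longrightarrow> x \<in> U \<Longrightarrow> g x \<in> V"
  unfolding LHom_def lin_on_def by auto

lemma LHom_add: "g \<in> LHom s1 s2 U V \<Longrightarrow> x \<in> U \<Longrightarrow> y \<in> U \<Longrightarrow> g (x + y) = g x + g y"
  unfolding LHom_def lin_on_def by auto

lemma LHom_scale: "g \<in> LHom s1 s2 U V \<Longrightarrow> x \<in> U \<Longrightarrow> g (s1 c x) = s2 c (g x)"
  unfolding LHom_def lin_on_def by auto

lemma LHom_eqI: "g \<in> LHom s1 s2 U V \<Longrightarrow> g' \<in> LHom s1' s2' U V' \<Longrightarrow> (\<And>x. x \<in> U \<Longrightarrow> g x = g' x) \<Longrightarrow> g = g'"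
  unfolding LHom_def by (rule ext) (metis (mono_tags, lifting) mem_Collect_eq)

lemma restrict0_in[simp]: "x \<in> U \<Longrightarrow> restrict0 U h x = h x"
  by (simp add: restrict0_def)

lemma restrict0_out[simp]: "x \<notin> U \<Longrightarrow> restrict0 U h x = 0"
  by (simp add: restrict0_def)

lemma restrict0_cong: "(\<And>x. x \<in> U \<Longrightarrow> h x = h' x) \<Longrightarrow> restrict0 U h = restrict0 U h'"
  by (auto simp: restrict0_def)

lemma vs_fscale:
  assumes "vector_space s" shows "vector_space (fscale s)"
proof -
  interpret module s using assms by (simp add: module_iff_vector_space)
  show ?thesis unfolding vector_space_def fscale_def
    by (auto simp: fun_eq_iff scale_right_distrib scale_left_distrib)
qed

lemma LHom_space:
  assumes vs: "vector_space s2" and z: "0 \<in> V" and cl: "\<forall>x\<in>V. \<forall>y\<in>V. x + y \<in> V"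
    and cs: "\<forall>c. \<forall>x\<in>V. s2 c x \<in> V"
  shows "0 \<in> LHom s1 s2 U V" "\<forall>g\<in>LHom s1 s2 U V. \<forall>g'\<in>LHom s1 s2 U V. g + g' \<in> LHom s1 s2 U V"
    "\<forall>c. \<forall>g\<in>LHom s1 s2 U V. fscale s2 c g \<in> LHom s1 s2 U V"
proof -
  interpret module s2 using vs by (simp add: module_iff_vector_space)
  show "0 \<in> LHom s1 s2 U V" using z unfolding LHom_def lin_on_def by auto
  show "\<forall>g\<in>LHom s1 s2 U V. \<forall>g'\<in>LHom s1 s2 U V. g + g' \<in> LHom s1 s2 U V"
    using cl unfolding LHom_def lin_on_def by (auto simp: algebra_simps scale_right_distrib)
  show "\<forall>c. \<forall>g\<in>LHom s1 s2 U V. fscale s2 c g \<in> LHom s1 s2 U V"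
    using cs unfolding LHom_def lin_on_def fscale_def by (auto simp: mult.commute scale_right_distrib)
qed

lemma postcomp_lin:
  assumes phi: "lin_on s2 s3 V W \<phi>" and vs3: "vector_space s3"
    and cU: "\<forall>x\<in>U. \<forall>y\<in>U. x + y \<in> U" "\<forall>c. \<forall>x\<in>U. s1 c x \<in> U"
  shows "lin_on (fscale s2) (fscale s3) (LHom s1 s2 U V) (LHom s1 s3 U W)
           (\<lambda>G. restrict0 U (\<lambda>x. \<phi> (G x)))"
proof -
  interpret module s3 using vs3 by (simp add: module_iff_vector_space)
  show ?thesis
    using phi cU unfolding lin_on_def LHom_def restrict0_def fscale_def
    by (auto simp: fun_eq_iff)
qed

lemma sum_list_fun_apply: "(\<Sum>i\<leftarrow>xs. F i) x = (\<Sum>i\<leftarrow>xs. F i x)"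
  by (induction xs) auto

lemma sum_list_concat_map:
  "sum_list (map f (concat xss)) = sum_list (map (\<lambda>xs. sum_list (map f xs)) xss)"
  by (induction xss) auto

lemma tmap2_G:
  assumes tm: "tmap2 s1 s2 s3 s4 U V X Y F" and vs: "vector_space sW"
    and g1: "\<forall>x\<in>X. \<forall>y\<in>Y. \<forall>y'\<in>Y. G x (y + y') = G x y + G x y'"
    and g2: "\<forall>x\<in>X. \<forall>y\<in>Y. \<forall>c. G x (s4 c y) = sW c (G x y)"
    and g3: "\<forall>x\<in>X. \<forall>x'\<in>X. \<forall>y\<in>Y. G (x + x') y = G x y + G x' y"
    and g4: "\<forall>x\<in>X. \<forall>y\<in>Y. \<forall>c. G (s3 c x) y = sW c (G x y)"
  shows "\<forall>u\<in>U. \<forall>u'\<in>U. \<forall>v\<in>V. (\<Sum>(x,y)\<leftarrow>F (u + u') v. G x y) = (\<Sum>(x,y)\<leftarrow>F u v. G x y) + (\<Sum>(x,y)\<leftarrow>F u' v. G x y)"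
    "\<forall>u\<in>U. \<forall>v\<in>V. \<forall>v'\<in>V. (\<Sum>(x,y)\<leftarrow>F u (v + v'). G x y) = (\<Sum>(x,y)\<leftarrow>F u v. G x y) + (\<Sum>(x,y)\<leftarrow>F u v'. G x y)"
    "\<forall>c. \<forall>u\<in>U. \<forall>v\<in>V. (\<Sum>(x,y)\<leftarrow>F (s1 c u) v. G x y) = sW c (\<Sum>(x,y)\<leftarrow>F u v. G x y)"
    "\<forall>c. \<forall>u\<in>U. \<forall>v\<in>V. (\<Sum>(x,y)\<leftarrow>F u (s2 c v). G x y) = sW c (\<Sum>(x,y)\<leftarrow>F u v. G x y)"
proof -
  note T = teq2_vec[OF _ vs g1 g2 g3 g4]
  have scl: "(\<Sum>(x,y)\<leftarrow>map (\<lambda>(x,y). (s3 c x, y)) L. G x y) = sW c (\<Sum>(x,y)\<leftarrow>L. G x y)"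
    if "set L \<subseteq> X \<times> Y" for L c
  proof -
    have "(\<Sum>(x,y)\<leftarrow>map (\<lambda>(x,y). (s3 c x, y)) L. G x y) = (\<Sum>(x,y)\<leftarrow>L. G (s3 c x) y)"
      by (simp add: comp_def case_prod_unfold)
    also have "\<dots> = (\<Sum>(x,y)\<leftarrow>L. sW c (G x y))"
      using that g4 by (intro arg_cong[where f=sum_list] map_cong) auto
    also have "\<dots> = sW c (\<Sum>(x,y)\<leftarrow>L. G x y)"
      using scale_sum_list[OF vs, of c "\<lambda>(x,y). G x y" L]
      by (simp add: case_prod_unfold)
    finally show ?thesis .
  qed
  show "\<forall>u\<in>U. \<forall>u'\<in>U. \<forall>v\<in>V. (\<Sum>(x,y)\<leftarrow>F (u + u') v. G x y) = (\<Sum>(x,y)\<leftarrow>F u v. G x y) + (\<Sum>(x,y)\<leftarrow>F u' v. G x y)"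
  proof (intro ballI)
    fix u u' v assume "u \<in> U" "u' \<in> U" "v \<in> V"
    then have "teq2 s3 s4 X Y (F (u + u') v) (F u v @ F u' v)" using tm unfolding tmap2_def by blast
    from T[OF this] show "(\<Sum>(x,y)\<leftarrow>F (u + u') v. G x y) = (\<Sum>(x,y)\<leftarrow>F u v. G x y) + (\<Sum>(x,y)\<leftarrow>F u' v. G x y)" by simp
  qed
  show "\<forall>u\<in>U. \<forall>v\<in>V. \<forall>v'\<in>V. (\<Sum>(x,y)\<leftarrow>F u (v + v'). G x y) = (\<Sum>(x,y)\<leftarrow>F u v. G x y) + (\<Sum>(x,y)\<leftarrow>F u v'. G x y)"
  proof (intro ballI)
    fix u v v' assume "u \<in> U" "v \<in> V" "v' \<in> V"
    then have "teq2 s3 s4 X Y (F u (v + v')) (F u v @ F u v')" using tm unfolding tmap2_def by blast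
    from T[OF this] show "(\<Sum>(x,y)\<leftarrow>F u (v + v'). G x y) = (\<Sum>(x,y)\<leftarrow>F u v. G x y) + (\<Sum>(x,y)\<leftarrow>F u v'. G x y)" by simp
  qed
  show "\<forall>c. \<forall>u\<in>U. \<forall>v\<in>V. (\<Sum>(x,y)\<leftarrow>F (s1 c u) v. G x y) = sW c (\<Sum>(x,y)\<leftarrow>F u v. G x y)"
  proof (intro allI ballI)
    fix c u v assume u: "u \<in> U" and v: "v \<in> V"
    have "(\<Sum>(x,y)\<leftarrow>F (s1 c u) v. G x y) = (\<Sum>(x,y)\<leftarrow>map (\<lambda>(x,y). (s3 c x, y)) (F u v). G x y)"
      using tm T u v unfolding tmap2_def by blast
    also have "\<dots> = sW c (\<Sum>(x,y)\<leftarrow>F u v. G x y)"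
      using tm u v unfolding tmap2_def by (intro scl) auto
    finally show "(\<Sum>(x,y)\<leftarrow>F (s1 c u) v. G x y) = sW c (\<Sum>(x,y)\<leftarrow>F u v. G x y)" .
  qed
  show "\<forall>c. \<forall>u\<in>U. \<forall>v\<in>V. (\<Sum>(x,y)\<leftarrow>F u (s2 c v). G x y) = sW c (\<Sum>(x,y)\<leftarrow>F u v. G x y)"
  proof (intro allI ballI)
    fix c u v assume u: "u \<in> U" and v: "v \<in> V"
    have "(\<Sum>(x,y)\<leftarrow>F u (s2 c v). G x y) = (\<Sum>(x,y)\<leftarrow>map (\<lambda>(x,y). (s3 c x, y)) (F u v). G x y)"
      using tm T u v unfolding tmap2_def by blast
    also have "\<dots> = sW c (\<Sum>(x,y)\<leftarrow>F u v. G x y)"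
      using tm u v unfolding tmap2_def by (intro scl) auto
    finally show "(\<Sum>(x,y)\<leftarrow>F u (s2 c v). G x y) = sW c (\<Sum>(x,y)\<leftarrow>F u v. G x y)" .
  qed
qed

locale ES =
  fixes sC :: "'k::field \<Rightarrow> 'c::ab_group_add \<Rightarrow> 'c"
    and C :: "'o \<Rightarrow> 'o \<Rightarrow> 'c set"
    and delta :: "'o \<Rightarrow> 'o \<Rightarrow> 'o \<Rightarrow> 'c \<Rightarrow> ('c \<times> 'c) list"
    and eps :: "'o \<Rightarrow> 'c \<Rightarrow> 'k"
    and sA :: "'k \<Rightarrow> 'a::ring_1 \<Rightarrow> 'a"
    and psi :: "'o \<Rightarrow> 'o \<Rightarrow> 'c \<Rightarrow> 'a \<Rightarrow> ('a \<times> 'c) list"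
    and gamma :: "'o \<Rightarrow> ('a \<Rightarrow> 'k) \<Rightarrow> 'c \<Rightarrow> 'a"
  assumes ent: "entwining sC C delta eps sA psi"
    and fd: "findim sA"
    and coint: "normalized_cointegral sC C delta eps sA psi gamma"
begin

lemma vsC: "vector_space sC"
  using ent unfolding entwining_def coalgebra_def by auto

lemma vsA: "vector_space sA"
  using ent unfolding entwining_def kalgebra_def by auto

lemma C_sub: "module.subspace sC (C X Y)"
  using ent unfolding entwining_def coalgebra_def by auto

lemma C_zero: "0 \<in> C X Y" and C_add: "\<forall>x\<in>C X Y. \<forall>y\<in>C X Y. x + y \<in> C X Y"
  and C_scale: "\<forall>c. \<forall>x\<in>C X Y. sC c x \<in> C X Y"
  using C_sub[of X Y] module.subspace_def[of sC "C X Y"] vsC module_iff_vector_space by auto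

lemma kalg: "sA c (a * b) = sA c a * b" "sA c (a * b) = a * sA c b"
  using ent unfolding entwining_def kalgebra_def by auto

lemma psi_tmap: "tmap2 sC sA sA sC (C X Y) UNIV UNIV (C X Y) (psi X Y)"
  using ent unfolding entwining_def by auto

lemma psi_set: "f \<in> C X Y \<Longrightarrow> p \<in> set (psi X Y f a) \<Longrightarrow> snd p \<in> C X Y"
proof -
  assume a: "f \<in> C X Y" "p \<in> set (psi X Y f a)"
  have "set (psi X Y f a) \<subseteq> UNIV \<times> C X Y" using psi_tmap[of X Y] a(1) unfolding tmap2_def by blast
  then show ?thesis using a(2) by (cases p) auto
qed

lemma delta_set: "f \<in> C X Z \<Longrightarrow> p \<in> set (delta X Y Z f) \<Longrightarrow> fst p \<in> C Y Z \<and> snd p \<in> C X Y"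
  using ent unfolding entwining_def coalgebra_def tmap1_def by fastforce

lemma coev_dual: "p \<in> set (coev sA) \<Longrightarrow> snd p \<in> Adual sA"
proof -
  assume p: "p \<in> set (coev sA)"
  define B where "B = (SOME B. finite_dimensional_vector_space sA B)"
  have fB: "finite_dimensional_vector_space sA B"
    using fd unfolding findim_def B_def by (metis someI)
  interpret finite_dimensional_vector_space sA B by fact
  define bs where "bs = (SOME bs. distinct bs \<and> set bs = B)"
  have "coev sA = map (\<lambda>b. (b, \<lambda>v. representation B v b)) bs"
    unfolding coev_def B_def bs_def Let_def by simp
  then obtain b where pb: "p = (b, \<lambda>v. representation B v b)" using p by auto
  interpret L: Vector_Spaces.linear sA "(*)" "\<lambda>v. representation B v b"
    by (rule linear_representation[OF independent_Basis span_Basis])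
  show ?thesis unfolding pb Adual_def lin_on_def by (simp add: L.add L.scale)
qed

lemma gamma_lin: "\<alpha> \<in> Adual sA \<Longrightarrow> lin_on sC sA (C X X) UNIV (gamma X \<alpha>)"
  using coint unfolding normalized_cointegral_def by auto

lemma coint1: "f \<in> C X Y \<Longrightarrow>
        teq3 sA sA sC UNIV UNIV (C X Y)
          [(b, d, h). (f1, f2) \<leftarrow> delta X X Y f, (ai, ai') \<leftarrow> coev sA,
                      (b, g) \<leftarrow> psi X Y f1 ai, (d, h) \<leftarrow> psi X Y g (gamma X ai' f2)]
          [(ai, gamma Y ai' f1, f2). (ai, ai') \<leftarrow> coev sA, (f1, f2) \<leftarrow> delta X Y Y f]"
  using coint unfolding normalized_cointegral_def by auto

lemma coint2: "f \<in> C X X \<Longrightarrow>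
        teq2 sA sA UNIV UNIV
          [(ai, gamma X ai' f * a). (ai, ai') \<leftarrow> coev sA]
          [(b * ai, gamma X ai' g). (b, g) \<leftarrow> psi X X f a, (ai, ai') \<leftarrow> coev sA]"
  using coint unfolding normalized_cointegral_def by auto

lemma coint3: "f \<in> C X X \<Longrightarrow> (\<Sum>(ai, ai')\<leftarrow>coev sA. ai * gamma X ai' f) = sA (eps X f) 1"
  using coint unfolding normalized_cointegral_def by auto

end

locale EM = ES sC C delta eps sA psi gamma
  for sC :: "'k::field \<Rightarrow> 'c::ab_group_add \<Rightarrow> 'c"
    and C :: "'o \<Rightarrow> 'o \<Rightarrow> 'c set"
    and delta :: "'o \<Rightarrow> 'o \<Rightarrow> 'o \<Rightarrow> 'c \<Rightarrow> ('c \<times> 'c) list"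
    and eps :: "'o \<Rightarrow> 'c \<Rightarrow> 'k"
    and sA :: "'k \<Rightarrow> 'a::ring_1 \<Rightarrow> 'a"
    and psi :: "'o \<Rightarrow> 'o \<Rightarrow> 'c \<Rightarrow> 'a \<Rightarrow> ('a \<times> 'c) list"
    and gamma :: "'o \<Rightarrow> ('a \<Rightarrow> 'k) \<Rightarrow> 'c \<Rightarrow> 'a" +
  fixes sM :: "'k \<Rightarrow> 'm::ab_group_add \<Rightarrow> 'm" and M :: "'o \<Rightarrow> 'm set"
    and pr :: "'o \<Rightarrow> 'o \<Rightarrow> ('c \<Rightarrow> 'm) \<Rightarrow> 'm" and act :: "'o \<Rightarrow> 'a \<Rightarrow> 'm \<Rightarrow> 'm"
  assumes EMa: "entwined_contramodule sC C delta eps sA psi sM M pr act"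
begin

lemma vsM: "vector_space sM"
  using EMa unfolding entwined_contramodule_def contramodule_def by auto

lemma M_sub: "module.subspace sM (M X)"
  using EMa unfolding entwined_contramodule_def contramodule_def by auto

lemma M_zero: "0 \<in> M X" and M_add: "\<forall>x\<in>M X. \<forall>y\<in>M X. x + y \<in> M X"
  and M_scale: "\<forall>c. \<forall>x\<in>M X. sM c x \<in> M X"
  using M_sub[of X] module.subspace_def[of sM "M X"] vsM module_iff_vector_space by auto

lemma pr_lin: "lin_on (fscale sM) sM (LHom sC sM (C X Y) (M Y)) (M X) (pr X Y)"
  using EMa unfolding entwined_contramodule_def contramodule_def by auto

lemma pr_assoc: "g \<in> LHom sC (fscale sM) (C X Y) (LHom sC sM (C Y Z) (M Z)) \<Longrightarrow>
        pr X Y (restrict0 (C X Y) (\<lambda>f. pr Y Z (g f))) =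
        pr X Z (restrict0 (C X Z) (\<lambda>f. \<Sum>(f1, f2)\<leftarrow>delta X Y Z f. g f2 f1))"
  using EMa unfolding entwined_contramodule_def contramodule_def by auto

lemma pr_counit: "m \<in> M X \<Longrightarrow> pr X X (restrict0 (C X X) (\<lambda>f. sM (eps X f) m)) = m"
  using EMa unfolding entwined_contramodule_def contramodule_def by auto

lemma act_a: "m \<in> M X \<Longrightarrow> lin_on sA sM UNIV (M X) (\<lambda>a. act X a m)"
  using EMa unfolding entwined_contramodule_def by auto

lemma act_m: "lin_on sM sM (M X) (M X) (act X a)"
  using EMa unfolding entwined_contramodule_def by auto

lemma act_one: "m \<in> M X \<Longrightarrow> act X 1 m = m"
  using EMa unfolding entwined_contramodule_def by auto

lemma act_mult: "m \<in> M X \<Longrightarrow> act X (a * b) m = act X a (act X b m)"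
  using EMa unfolding entwined_contramodule_def by auto

definition tw :: "'o \<Rightarrow> 'o \<Rightarrow> 'a \<Rightarrow> ('c \<Rightarrow> 'm) \<Rightarrow> 'c \<Rightarrow> 'm" where
  "tw X Y a g = restrict0 (C X Y) (\<lambda>f. \<Sum>(b, h)\<leftarrow>psi X Y f a. act Y b (g h))"

lemma act_pr: "g \<in> LHom sC sM (C X Y) (M Y) \<Longrightarrow> act X a (pr X Y g) = pr X Y (tw X Y a g)"
  using EMa unfolding entwined_contramodule_def tw_def by auto

lemma act_in: "m \<in> M X \<Longrightarrow> act X a m \<in> M X"
  using act_m[of X a] unfolding lin_on_def by auto

lemma act_add_m: "m \<in> M X \<Longrightarrow> m' \<in> M X \<Longrightarrow> act X a (m + m') = act X a m + act X a m'"
  using act_m[of X a] unfolding lin_on_def by auto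

lemma act_scale_m: "m \<in> M X \<Longrightarrow> act X a (sM c m) = sM c (act X a m)"
  using act_m[of X a] unfolding lin_on_def by auto

lemma act_add_a: "m \<in> M X \<Longrightarrow> act X (a + a') m = act X a m + act X a' m"
  using act_a[of m X] unfolding lin_on_def by auto

lemma act_scale_a: "m \<in> M X \<Longrightarrow> act X (sA c a) m = sM c (act X a m)"
  using act_a[of m X] unfolding lin_on_def by auto

lemma pr_in: "g \<in> LHom sC sM (C X Y) (M Y) \<Longrightarrow> pr X Y g \<in> M X"
  using pr_lin[of X Y] unfolding lin_on_def by auto

lemmas LH = LHom_space[OF vsM M_zero M_add M_scale]

lemma sum_in_M: "\<forall>x\<in>set xs. F x \<in> M X \<Longrightarrow> (\<Sum>x\<leftarrow>xs. F x) \<in> M X"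
  by (rule sum_list_in[OF M_zero M_add])

lemma pr_sum: "\<forall>x\<in>set xs. G x \<in> LHom sC sM (C X Y) (M Y) \<Longrightarrow>
   pr X Y (\<Sum>x\<leftarrow>xs. G x) = (\<Sum>x\<leftarrow>xs. pr X Y (G x))"
proof -
  assume a: "\<forall>x\<in>set xs. G x \<in> LHom sC sM (C X Y) (M Y)"
  have ad: "\<forall>x\<in>LHom sC sM (C X Y) (M Y). \<forall>y\<in>LHom sC sM (C X Y) (M Y). pr X Y (x + y) = pr X Y x + pr X Y y"
    using pr_lin[of X Y] unfolding lin_on_def by blast
  show ?thesis by (rule additive_sum_list[OF ad LH(1) LH(2) a])
qed

lemma LHom_sum: "\<forall>x\<in>set xs. G x \<in> LHom sC sM (C X Y) (M Y) \<Longrightarrow>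
   (\<Sum>x\<leftarrow>xs. G x) \<in> LHom sC sM (C X Y) (M Y)"
  using LH[of sC "C X Y" Y] by (intro sum_list_in) auto

lemma act_sum_m: "\<forall>x\<in>set xs. F x \<in> M X \<Longrightarrow> act X a (\<Sum>x\<leftarrow>xs. F x) = (\<Sum>x\<leftarrow>xs. act X a (F x))"
  using act_m[of X a] M_zero M_add unfolding lin_on_def
  by (intro additive_sum_list) auto

lemma act_sum_a: "m \<in> M X \<Longrightarrow> act X (\<Sum>x\<leftarrow>xs. F x) m = (\<Sum>x\<leftarrow>xs. act X (F x) m)"
  using act_a[of m X] additive_sum_list[of UNIV "\<lambda>a. act X a m" xs F] unfolding lin_on_def
  by auto

lemma tw_facts:
  assumes g: "g \<in> LHom sC sM (C X Y) (M Y)"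
  defines "G \<equiv> \<lambda>b h. act Y b (g h)"
  shows "\<forall>u\<in>C X Y. \<forall>u'\<in>C X Y. \<forall>v\<in>UNIV. (\<Sum>(x,y)\<leftarrow>psi X Y (u + u') v. G x y) = (\<Sum>(x,y)\<leftarrow>psi X Y u v. G x y) + (\<Sum>(x,y)\<leftarrow>psi X Y u' v. G x y)"
    "\<forall>u\<in>C X Y. \<forall>v\<in>UNIV. \<forall>v'\<in>UNIV. (\<Sum>(x,y)\<leftarrow>psi X Y u (v + v'). G x y) = (\<Sum>(x,y)\<leftarrow>psi X Y u v. G x y) + (\<Sum>(x,y)\<leftarrow>psi X Y u v'. G x y)"
    "\<forall>c. \<forall>u\<in>C X Y. \<forall>v\<in>UNIV. (\<Sum>(x,y)\<leftarrow>psi X Y (sC c u) v. G x y) = sM c (\<Sum>(x,y)\<leftarrow>psi X Y u v. G x y)"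
    "\<forall>c. \<forall>u\<in>C X Y. \<forall>v\<in>UNIV. (\<Sum>(x,y)\<leftarrow>psi X Y u (sA c v). G x y) = sM c (\<Sum>(x,y)\<leftarrow>psi X Y u v. G x y)"
proof -
  have gin: "h \<in> C X Y \<Longrightarrow> g h \<in> M Y" for h using LHom_in[OF g] .
  note T = tmap2_G[OF psi_tmap vsM, where G=G]
  have g1: "\<forall>x\<in>UNIV. \<forall>y\<in>C X Y. \<forall>y'\<in>C X Y. G x (y + y') = G x y + G x y'"
    unfolding G_def using LHom_add[OF g] gin act_add_m by auto
  have g2: "\<forall>x\<in>UNIV. \<forall>y\<in>C X Y. \<forall>c. G x (sC c y) = sM c (G x y)"
    unfolding G_def using LHom_scale[OF g] gin act_scale_m by auto
  have g3: "\<forall>x\<in>UNIV. \<forall>x'\<in>UNIV. \<forall>y\<in>C X Y. G (x + x') y = G x y + G x' y"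
    unfolding G_def using gin act_add_a by auto
  have g4: "\<forall>x\<in>UNIV. \<forall>y\<in>C X Y. \<forall>c. G (sA c x) y = sM c (G x y)"
    unfolding G_def using gin act_scale_a by auto
  show "\<forall>u\<in>C X Y. \<forall>u'\<in>C X Y. \<forall>v\<in>UNIV. (\<Sum>(x,y)\<leftarrow>psi X Y (u + u') v. G x y) = (\<Sum>(x,y)\<leftarrow>psi X Y u v. G x y) + (\<Sum>(x,y)\<leftarrow>psi X Y u' v. G x y)"
    "\<forall>u\<in>C X Y. \<forall>v\<in>UNIV. \<forall>v'\<in>UNIV. (\<Sum>(x,y)\<leftarrow>psi X Y u (v + v'). G x y) = (\<Sum>(x,y)\<leftarrow>psi X Y u v. G x y) + (\<Sum>(x,y)\<leftarrow>psi X Y u v'. G x y)"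
    "\<forall>c. \<forall>u\<in>C X Y. \<forall>v\<in>UNIV. (\<Sum>(x,y)\<leftarrow>psi X Y (sC c u) v. G x y) = sM c (\<Sum>(x,y)\<leftarrow>psi X Y u v. G x y)"
    "\<forall>c. \<forall>u\<in>C X Y. \<forall>v\<in>UNIV. (\<Sum>(x,y)\<leftarrow>psi X Y u (sA c v). G x y) = sM c (\<Sum>(x,y)\<leftarrow>psi X Y u v. G x y)"
    using T[OF g1 g2 g3 g4] by auto
qed

lemma tw_inner_in:
  assumes g: "g \<in> LHom sC sM (C X Y) (M Y)" and f: "f \<in> C X Y"
  shows "(\<Sum>(b, h)\<leftarrow>psi X Y f a. act Y b (g h)) \<in> M Y"
proof -
  have "\<forall>p\<in>set (psi X Y f a). (case p of (b, h) \<Rightarrow> act Y b (g h)) \<in> M Y"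
    using psi_set[OF f] LHom_in[OF g] act_in by auto
  then show ?thesis by (rule sum_in_M)
qed

lemma tw_LHom:
  assumes g: "g \<in> LHom sC sM (C X Y) (M Y)"
  shows "tw X Y a g \<in> LHom sC sM (C X Y) (M Y)"
  unfolding tw_def
proof (rule LHom_restrict0[OF _ C_add C_scale])
  note F = tw_facts[OF g]
  show "lin_on sC sM (C X Y) (M Y) (\<lambda>f. \<Sum>(b, h)\<leftarrow>psi X Y f a. act Y b (g h))"
    unfolding lin_on_def using F(1,3) tw_inner_in[OF g] by auto
qed

lemma tw_lin_a:
  assumes g: "g \<in> LHom sC sM (C X Y) (M Y)"
  shows "lin_on sA (fscale sM) UNIV (LHom sC sM (C X Y) (M Y)) (\<lambda>a. tw X Y a g)"
proof -
  interpret module sM using vsM by (simp add: module_iff_vector_space)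
  note F = tw_facts[OF g]
  show ?thesis unfolding lin_on_def
    using tw_LHom[OF g] F(2,4) by (auto simp: tw_def fun_eq_iff restrict0_def fscale_def)
qed

lemma tw_lin_g:
  "lin_on (fscale sM) (fscale sM) (LHom sC sM (C X Y) (M Y)) (LHom sC sM (C X Y) (M Y)) (\<lambda>g. tw X Y a g)"
proof -
  interpret module sM using vsM by (simp add: module_iff_vector_space)
  have add: "tw X Y a (g + g') = tw X Y a g + tw X Y a g'"
    if g: "g \<in> LHom sC sM (C X Y) (M Y)" and g': "g' \<in> LHom sC sM (C X Y) (M Y)" for g g'
  proof -
    have "(\<Sum>(b, h)\<leftarrow>psi X Y f a. act Y b ((g + g') h)) =
          (\<Sum>(b, h)\<leftarrow>psi X Y f a. act Y b (g h)) + (\<Sum>(b, h)\<leftarrow>psi X Y f a. act Y b (g' h))"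
      if f: "f \<in> C X Y" for f
    proof -
      have "(\<Sum>(b, h)\<leftarrow>psi X Y f a. act Y b ((g + g') h)) =
            (\<Sum>p\<leftarrow>psi X Y f a. (case p of (b, h) \<Rightarrow> act Y b (g h)) + (case p of (b, h) \<Rightarrow> act Y b (g' h)))"
        using psi_set[OF f] LHom_in[OF g] LHom_in[OF g'] act_add_m
        by (intro arg_cong[where f=sum_list] map_cong) (auto split: prod.splits)
      then show ?thesis by (simp add: sum_list_addf)
    qed
    then show ?thesis by (auto simp: tw_def fun_eq_iff restrict0_def)
  qed
  have scl: "tw X Y a (fscale sM c g) = fscale sM c (tw X Y a g)"
    if g: "g \<in> LHom sC sM (C X Y) (M Y)" for g c
  proof -
    have "(\<Sum>(b, h)\<leftarrow>psi X Y f a. act Y b (sM c (g h))) = sM c (\<Sum>(b, h)\<leftarrow>psi X Y f a. act Y b (g h))"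
      if f: "f \<in> C X Y" for f
    proof -
      have "(\<Sum>(b, h)\<leftarrow>psi X Y f a. act Y b (sM c (g h))) =
            (\<Sum>p\<leftarrow>psi X Y f a. sM c (case p of (b, h) \<Rightarrow> act Y b (g h)))"
        using psi_set[OF f] LHom_in[OF g] act_scale_m
        by (intro arg_cong[where f=sum_list] map_cong) (auto split: prod.splits)
      then show ?thesis by (simp add: scale_sum_list[OF vsM] case_prod_unfold)
    qed
    then show ?thesis by (auto simp: tw_def fun_eq_iff restrict0_def fscale_def)
  qed
  show ?thesis unfolding lin_on_def using add scl tw_LHom by auto
qed

end

lemma lin_on_sum_list2:
  assumes vs: "vector_space s2" and z: "0 \<in> V" and cl: "\<forall>x\<in>V. \<forall>y\<in>V. x + y \<in> V"
    and F: "\<And>a b. (a, b) \<in> set xs \<Longrightarrow> lin_on s1 s2 U V (\<lambda>u. F a b u)"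
  shows "lin_on s1 s2 U V (\<lambda>u. \<Sum>(a, b)\<leftarrow>xs. F a b u)"
proof -
  have "lin_on s1 s2 U V (\<lambda>u. \<Sum>i\<leftarrow>xs. F (fst i) (snd i) u)"
    using F by (intro lin_on_sum_list[OF vs z cl]) auto
  then show ?thesis by (simp add: case_prod_unfold)
qed

lemma sum_list_concat': "sum_list (concat xss) = sum_list (map sum_list xss)"
  by (induction xss) auto

context EM begin

lemma EM_eps:
  assumes m: "m \<in> M X" and f: "f \<in> C X X"
  shows "(\<Sum>(ai, ai')\<leftarrow>coev sA. act X ai (act X (gamma X ai' f) m)) = sM (eps X f) m"
proof -
  have "(\<Sum>(ai, ai')\<leftarrow>coev sA. act X ai (act X (gamma X ai' f) m)) =
        (\<Sum>(ai, ai')\<leftarrow>coev sA. act X (ai * gamma X ai' f) m)"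
    using m by (simp add: act_mult case_prod_unfold)
  also have "\<dots> = act X (\<Sum>(ai, ai')\<leftarrow>coev sA. ai * gamma X ai' f) m"
    using act_sum_a[OF m, of "\<lambda>p. fst p * gamma X (snd p) f" "coev sA"]
    by (simp add: case_prod_unfold)
  also have "\<dots> = act X (sA (eps X f) 1) m" using coint3[OF f] by simp
  also have "\<dots> = sM (eps X f) m" using m by (simp add: act_scale_a act_one)
  finally show ?thesis .
qed

end

locale EMN = M: EM sC C delta eps sA psi gamma sM M pr act + N: EM sC C delta eps sA psi gamma sN N pr' act'
  for sC :: "'k::field \<Rightarrow> 'c::ab_group_add \<Rightarrow> 'c"
    and C :: "'o \<Rightarrow> 'o \<Rightarrow> 'c set"
    and delta :: "'o \<Rightarrow> 'o \<Rightarrow> 'o \<Rightarrow> 'c \<Rightarrow> ('c \<times> 'c) list"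
    and eps :: "'o \<Rightarrow> 'c \<Rightarrow> 'k"
    and sA :: "'k \<Rightarrow> 'a::ring_1 \<Rightarrow> 'a"
    and psi :: "'o \<Rightarrow> 'o \<Rightarrow> 'c \<Rightarrow> 'a \<Rightarrow> ('a \<times> 'c) list"
    and gamma :: "'o \<Rightarrow> ('a \<Rightarrow> 'k) \<Rightarrow> 'c \<Rightarrow> 'a"
    and sM :: "'k \<Rightarrow> 'm::ab_group_add \<Rightarrow> 'm" and M :: "'o \<Rightarrow> 'm set"
    and pr :: "'o \<Rightarrow> 'o \<Rightarrow> ('c \<Rightarrow> 'm) \<Rightarrow> 'm" and act :: "'o \<Rightarrow> 'a \<Rightarrow> 'm \<Rightarrow> 'm"
    and sN :: "'k \<Rightarrow> 'n::ab_group_add \<Rightarrow> 'n" and N :: "'o \<Rightarrow> 'n set"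
    and pr' :: "'o \<Rightarrow> 'o \<Rightarrow> ('c \<Rightarrow> 'n) \<Rightarrow> 'n" and act' :: "'o \<Rightarrow> 'a \<Rightarrow> 'n \<Rightarrow> 'n"
begin

definition avg :: "('o \<Rightarrow> 'n \<Rightarrow> 'm) \<Rightarrow> 'o \<Rightarrow> 'n \<Rightarrow> 'c \<Rightarrow> 'm" where
  "avg s X n = restrict0 (C X X)
     (\<lambda>f. \<Sum>(ai, ai')\<leftarrow>coev sA. act X ai (s X (act' X (gamma X ai' f) n)))"

definition tt :: "('o \<Rightarrow> 'n \<Rightarrow> 'm) \<Rightarrow> 'o \<Rightarrow> 'n \<Rightarrow> 'm" where
  "tt s X = restrict0 (N X) (\<lambda>n. pr X X (avg s X n))"

context
  fixes s :: "'o \<Rightarrow> 'n \<Rightarrow> 'm"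
  assumes sLH: "\<And>X. s X \<in> LHom sN sM (N X) (M X)"
begin

lemma s_lin: "lin_on sN sM (N X) (M X) (s X)"
  using LHom_lin[OF sLH] .

lemma s_in: "n \<in> N X \<Longrightarrow> s X n \<in> M X"
  using LHom_in[OF sLH] .

lemma s_add: "n \<in> N X \<Longrightarrow> n' \<in> N X \<Longrightarrow> s X (n + n') = s X n + s X n'"
  using LHom_add[OF sLH] .

lemma s_scale: "n \<in> N X \<Longrightarrow> s X (sN c n) = sM c (s X n)"
  using LHom_scale[OF sLH] .

lemma s_sum: "\<forall>x\<in>set xs. F x \<in> N X \<Longrightarrow> s X (\<Sum>x\<leftarrow>xs. F x) = (\<Sum>x\<leftarrow>xs. s X (F x))"
  using s_add N.M_zero N.M_add by (intro additive_sum_list) auto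

lemma avg_inner_lin_f:
  assumes n: "n \<in> N X"
  shows "lin_on sC sM (C X X) (M X) (\<lambda>f. \<Sum>(ai, ai')\<leftarrow>coev sA. act X ai (s X (act' X (gamma X ai' f) n)))"
proof (rule lin_on_sum_list2[OF M.vsM M.M_zero M.M_add])
  fix ai ai' assume p: "(ai, ai') \<in> set (coev sA)"
  have g: "lin_on sC sA (C X X) UNIV (gamma X ai')"
    using M.gamma_lin M.coev_dual[OF p] by simp
  show "lin_on sC sM (C X X) (M X) (\<lambda>f. act X ai (s X (act' X (gamma X ai' f) n)))"
    by (rule lin_on_comp[OF lin_on_comp[OF lin_on_comp[OF g N.act_a[OF n]] s_lin] M.act_m])
qed

lemma avg_inner_lin_n:
  assumes f: "f \<in> C X X"
  shows "lin_on sN sM (N X) (M X) (\<lambda>n. \<Sum>(ai, ai')\<leftarrow>coev sA. act X ai (s X (act' X (gamma X ai' f) n)))"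
proof (rule lin_on_sum_list2[OF M.vsM M.M_zero M.M_add])
  fix ai ai' assume p: "(ai, ai') \<in> set (coev sA)"
  show "lin_on sN sM (N X) (M X) (\<lambda>n. act X ai (s X (act' X (gamma X ai' f) n)))"
    by (rule lin_on_comp[OF lin_on_comp[OF N.act_m s_lin] M.act_m])
qed

lemma avg_LHom: "n \<in> N X \<Longrightarrow> avg s X n \<in> LHom sC sM (C X X) (M X)"
  unfolding avg_def by (rule LHom_restrict0[OF avg_inner_lin_f M.C_add M.C_scale])

lemma avg_lin: "lin_on sN (fscale sM) (N X) (LHom sC sM (C X X) (M X)) (avg s X)"
proof -
  interpret module sM using M.vsM by (simp add: module_iff_vector_space)
  have add: "avg s X (n + n') = avg s X n + avg s X n'" if "n \<in> N X" "n' \<in> N X" for n n'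
    using avg_inner_lin_n that unfolding avg_def lin_on_def
    by (auto simp: fun_eq_iff restrict0_def)
  have scl: "avg s X (sN c n) = fscale sM c (avg s X n)" if "n \<in> N X" for n c
    using avg_inner_lin_n that unfolding avg_def lin_on_def
    by (auto simp: fun_eq_iff restrict0_def fscale_def)
  show ?thesis unfolding lin_on_def using add scl avg_LHom by auto
qed

lemma tt_LHom: "tt s X \<in> LHom sN sM (N X) (M X)"
  unfolding tt_def
  by (rule LHom_restrict0[OF lin_on_comp[OF avg_lin M.pr_lin] N.M_add N.M_scale])

end
end

lemma sl_cong: "(\<And>x. x \<in> set xs \<Longrightarrow> f x = g x) \<Longrightarrow> sum_list (map f xs) = sum_list (map g xs)"
  by (metis map_cong)

locale EMNs = EMN sC C delta eps sA psi gamma sM M pr act sN N pr' act'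
  for sC :: "'k::field \<Rightarrow> 'c::ab_group_add \<Rightarrow> 'c"
    and C :: "'o \<Rightarrow> 'o \<Rightarrow> 'c set"
    and delta :: "'o \<Rightarrow> 'o \<Rightarrow> 'o \<Rightarrow> 'c \<Rightarrow> ('c \<times> 'c) list"
    and eps :: "'o \<Rightarrow> 'c \<Rightarrow> 'k"
    and sA :: "'k \<Rightarrow> 'a::ring_1 \<Rightarrow> 'a"
    and psi :: "'o \<Rightarrow> 'o \<Rightarrow> 'c \<Rightarrow> 'a \<Rightarrow> ('a \<times> 'c) list"
    and gamma :: "'o \<Rightarrow> ('a \<Rightarrow> 'k) \<Rightarrow> 'c \<Rightarrow> 'a"
    and sM :: "'k \<Rightarrow> 'm::ab_group_add \<Rightarrow> 'm" and M :: "'o \<Rightarrow> 'm set"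
    and pr :: "'o \<Rightarrow> 'o \<Rightarrow> ('c \<Rightarrow> 'm) \<Rightarrow> 'm" and act :: "'o \<Rightarrow> 'a \<Rightarrow> 'm \<Rightarrow> 'm"
    and sN :: "'k \<Rightarrow> 'n::ab_group_add \<Rightarrow> 'n" and N :: "'o \<Rightarrow> 'n set"
    and pr' :: "'o \<Rightarrow> 'o \<Rightarrow> ('c \<Rightarrow> 'n) \<Rightarrow> 'n" and act' :: "'o \<Rightarrow> 'a \<Rightarrow> 'n \<Rightarrow> 'n" +
  fixes s :: "'o \<Rightarrow> 'n \<Rightarrow> 'm"
  assumes sLH: "\<And>X. s X \<in> LHom sN sM (N X) (M X)"
    and sctr: "\<And>X Y g. g \<in> LHom sC sN (C X Y) (N Y) \<Longrightarrow>
        s X (pr' X Y g) = pr X Y (restrict0 (C X Y) (\<lambda>f. s Y (g f)))"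
begin

lemmas s_lin' = s_lin[OF sLH] and s_in' = s_in[OF sLH] and s_add' = s_add[OF sLH]
  and s_scale' = s_scale[OF sLH] and s_sum' = s_sum[OF sLH]
  and avg_LHom' = avg_LHom[OF sLH] and avg_lin' = avg_lin[OF sLH] and tt_LHom' = tt_LHom[OF sLH]

lemma tt_eq: "n \<in> N X \<Longrightarrow> tt s X n = pr X X (avg s X n)"
  unfolding tt_def by simp

lemma avg_eq: "f \<in> C X X \<Longrightarrow> avg s X n f = (\<Sum>(ai, ai')\<leftarrow>coev sA. act X ai (s X (act' X (gamma X ai' f) n)))"
  unfolding avg_def by simp

lemma tt_act:
  assumes n: "n \<in> N X"
  shows "tt s X (act' X a n) = act X a (tt s X n)"
proof -
  have an: "act' X a n \<in> N X" using N.act_in[OF n] .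
  define B where "B x y = act X x (s X (act' X y n))" for x y
  have Bin: "s X (act' X y n) \<in> M X" for y using s_in'[OF N.act_in[OF n]] .
  have l2: "\<forall>u\<in>UNIV. \<forall>v\<in>UNIV. \<forall>v'\<in>UNIV. B u (v + v') = B u v + B u v'"
    unfolding B_def using N.act_add_a[OF n] s_add'[OF N.act_in[OF n] N.act_in[OF n]] M.act_add_m[OF Bin Bin]
    by simp
  have h2: "\<forall>u\<in>UNIV. \<forall>v\<in>UNIV. \<forall>c. B u (sA c v) = sM c (B u v)"
    unfolding B_def using N.act_scale_a[OF n] s_scale'[OF N.act_in[OF n]] M.act_scale_m[OF Bin]
    by simp
  have l1: "\<forall>u\<in>UNIV. \<forall>u'\<in>UNIV. \<forall>v\<in>UNIV. B (u + u') v = B u v + B u' v"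
    unfolding B_def using M.act_add_a[OF Bin] by simp
  have h1: "\<forall>u\<in>UNIV. \<forall>v\<in>UNIV. \<forall>c. B (sA c u) v = sM c (B u v)"
    unfolding B_def using M.act_scale_a[OF Bin] by simp
  have key: "avg s X (act' X a n) = M.tw X X a (avg s X n)"
    unfolding avg_def M.tw_def
  proof (rule restrict0_cong)
    fix f assume f: "f \<in> C X X"
    have "(\<Sum>(ai, ai')\<leftarrow>coev sA. act X ai (s X (act' X (gamma X ai' f) (act' X a n)))) =
          (\<Sum>(ai, ai')\<leftarrow>coev sA. B ai (gamma X ai' f * a))"
      unfolding B_def using N.act_mult[OF n] by (simp add: case_prod_unfold)
    also have "\<dots> = (\<Sum>(x, y)\<leftarrow>[(ai, gamma X ai' f * a). (ai, ai') \<leftarrow> coev sA]. B x y)"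
      by (simp add: case_prod_unfold comp_def)
    also have "\<dots> = (\<Sum>(x, y)\<leftarrow>[(b * ai, gamma X ai' g). (b, g) \<leftarrow> psi X X f a, (ai, ai') \<leftarrow> coev sA]. B x y)"
      by (rule teq2_vec[OF M.coint2[OF f] M.vsM l2 h2 l1 h1])
    also have "\<dots> = (\<Sum>(b, g)\<leftarrow>psi X X f a. \<Sum>(ai, ai')\<leftarrow>coev sA. B (b * ai) (gamma X ai' g))"
      by (simp add: case_prod_unfold comp_def map_concat sum_list_concat')
    also have "\<dots> = (\<Sum>(b, g)\<leftarrow>psi X X f a. act X b (restrict0 (C X X)
                     (\<lambda>f. \<Sum>(ai, ai')\<leftarrow>coev sA. act X ai (s X (act' X (gamma X ai' f) n))) g))"
    proof (rule sl_cong)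
      fix p assume p: "p \<in> set (psi X X f a)"
      obtain b g where pbg: "p = (b, g)" by (cases p)
      have g: "g \<in> C X X" using M.psi_set[OF f p] pbg by simp
      have "act X b (\<Sum>(ai, ai')\<leftarrow>coev sA. act X ai (s X (act' X (gamma X ai' g) n))) =
            (\<Sum>(ai, ai')\<leftarrow>coev sA. act X b (act X ai (s X (act' X (gamma X ai' g) n))))"
        using M.act_sum_m[of "coev sA" "\<lambda>p. act X (fst p) (s X (act' X (gamma X (snd p) g) n))" X b]
          M.act_in Bin by (simp add: case_prod_unfold)
      also have "\<dots> = (\<Sum>(ai, ai')\<leftarrow>coev sA. B (b * ai) (gamma X ai' g))"
        unfolding B_def using M.act_mult Bin by (simp add: case_prod_unfold)
      finally show "(case p of (b, g) \<Rightarrow> \<Sum>(ai, ai')\<leftarrow>coev sA. B (b * ai) (gamma X ai' g)) =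
         (case p of (b, g) \<Rightarrow> act X b (restrict0 (C X X)
            (\<lambda>f. \<Sum>(ai, ai')\<leftarrow>coev sA. act X ai (s X (act' X (gamma X ai' f) n))) g))"
        using g pbg by simp
    qed
    finally show "(\<Sum>(ai, ai')\<leftarrow>coev sA. act X ai (s X (act' X (gamma X ai' f) (act' X a n)))) =
      (\<Sum>(b, h)\<leftarrow>psi X X f a. act X b (restrict0 (C X X)
          (\<lambda>f. \<Sum>(ai, ai')\<leftarrow>coev sA. act X ai (s X (act' X (gamma X ai' f) n))) h))" .
  qed
  show ?thesis
    using tt_eq[OF an] tt_eq[OF n] key M.act_pr[OF avg_LHom'[OF n]] by simp
qed

end

context EMNs begin

lemma tt_ctr:
  assumes g: "g \<in> LHom sC sN (C X Y) (N Y)"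
  shows "tt s X (pr' X Y g) = pr X Y (restrict0 (C X Y) (\<lambda>f. tt s Y (g f)))"
proof -
  define post where "post G = restrict0 (C X Y) (\<lambda>h. s Y (G h))" for G
  define H0 where "H0 f = (\<Sum>(ai, ai')\<leftarrow>coev sA. M.tw X Y ai (post (N.tw X Y (gamma X ai' f) g)))" for f
  define H where "H = restrict0 (C X X) H0"
  define T where "T b d h = act Y b (s Y (act' Y d (g h)))" for b d h
  have gw: "w \<in> C X Y \<Longrightarrow> g w \<in> N Y" for w using LHom_in[OF g] .
  have aw: "w \<in> C X Y \<Longrightarrow> act' Y v (g w) \<in> N Y" for w v using N.act_in[OF gw] .
  have sw: "w \<in> C X Y \<Longrightarrow> s Y (act' Y v (g w)) \<in> M Y" for w v using s_in'[OF aw] .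
  have post_lin: "lin_on (fscale sN) (fscale sM) (LHom sC sN (C X Y) (N Y)) (LHom sC sM (C X Y) (M Y)) post"
    unfolding post_def by (rule postcomp_lin[OF s_lin' M.vsM M.C_add M.C_scale])
  have post_in: "G \<in> LHom sC sN (C X Y) (N Y) \<Longrightarrow> post G \<in> LHom sC sM (C X Y) (M Y)" for G
    using post_lin unfolding lin_on_def by blast
  have H0_lin: "lin_on sC (fscale sM) (C X X) (LHom sC sM (C X Y) (M Y)) H0"
    unfolding H0_def
  proof (rule lin_on_sum_list2[OF vs_fscale[OF M.vsM] M.LH(1) M.LH(2)])
    fix ai ai' assume p: "(ai, ai') \<in> set (coev sA)"
    have ga: "lin_on sC sA (C X X) UNIV (gamma X ai')"
      using M.gamma_lin M.coev_dual[OF p] by simp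
    show "lin_on sC (fscale sM) (C X X) (LHom sC sM (C X Y) (M Y))
            (\<lambda>f. M.tw X Y ai (post (N.tw X Y (gamma X ai' f) g)))"
      by (rule lin_on_comp[OF lin_on_comp[OF lin_on_comp[OF ga N.tw_lin_a[OF g]] post_lin] M.tw_lin_g])
  qed
  have H_LHom: "H \<in> LHom sC (fscale sM) (C X X) (LHom sC sM (C X Y) (M Y))"
    unfolding H_def by (rule LHom_restrict0[OF H0_lin M.C_add M.C_scale])
  have p'in: "pr' X Y g \<in> N X" using N.pr_in[OF g] .
  have step1: "avg s X (pr' X Y g) = restrict0 (C X X) (\<lambda>f. pr X Y (H f))"
    unfolding avg_def
  proof (rule restrict0_cong)
    fix f assume f: "f \<in> C X X"
    have "(\<Sum>(ai, ai')\<leftarrow>coev sA. act X ai (s X (act' X (gamma X ai' f) (pr' X Y g)))) =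
          (\<Sum>(ai, ai')\<leftarrow>coev sA. pr X Y (M.tw X Y ai (post (N.tw X Y (gamma X ai' f) g))))"
    proof (rule sl_cong)
      fix p assume p: "p \<in> set (coev sA)"
      obtain ai ai' where pa: "p = (ai, ai')" by (cases p)
      have "act X ai (s X (act' X (gamma X ai' f) (pr' X Y g))) =
            act X ai (s X (pr' X Y (N.tw X Y (gamma X ai' f) g)))"
        using N.act_pr[OF g] by simp
      also have "\<dots> = act X ai (pr X Y (post (N.tw X Y (gamma X ai' f) g)))"
        using sctr[OF N.tw_LHom[OF g]] unfolding post_def by simp
      also have "\<dots> = pr X Y (M.tw X Y ai (post (N.tw X Y (gamma X ai' f) g)))"
        using M.act_pr[OF post_in[OF N.tw_LHom[OF g]]] by simp
      finally show "(case p of (ai, ai') \<Rightarrow> act X ai (s X (act' X (gamma X ai' f) (pr' X Y g)))) =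
          (case p of (ai, ai') \<Rightarrow> pr X Y (M.tw X Y ai (post (N.tw X Y (gamma X ai' f) g))))"
        using pa by simp
    qed
    also have "\<dots> = pr X Y (H0 f)"
      unfolding H0_def
      using M.pr_sum[of "coev sA" "\<lambda>p. M.tw X Y (fst p) (post (N.tw X Y (gamma X (snd p) f) g))" X Y]
        M.tw_LHom[OF post_in[OF N.tw_LHom[OF g]]]
      by (simp add: case_prod_unfold)
    also have "\<dots> = pr X Y (H f)" using f unfolding H_def by simp
    finally show "(\<Sum>(ai, ai')\<leftarrow>coev sA. act X ai (s X (act' X (gamma X ai' f) (pr' X Y g)))) = pr X Y (H f)" .
  qed
  have HT: "H f2 f1 = (\<Sum>(ai, ai')\<leftarrow>coev sA. \<Sum>(b, h')\<leftarrow>psi X Y f1 ai.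
              \<Sum>(d, h)\<leftarrow>psi X Y h' (gamma X ai' f2). T b d h)"
    if f2: "f2 \<in> C X X" and f1: "f1 \<in> C X Y" for f1 f2
  proof -
    have "H f2 f1 = (\<Sum>(ai, ai')\<leftarrow>coev sA. M.tw X Y ai (post (N.tw X Y (gamma X ai' f2) g)) f1)"
      using f2 unfolding H_def H0_def by (simp add: sum_list_fun_apply case_prod_unfold)
    also have "\<dots> = (\<Sum>(ai, ai')\<leftarrow>coev sA. \<Sum>(b, h')\<leftarrow>psi X Y f1 ai.
              \<Sum>(d, h)\<leftarrow>psi X Y h' (gamma X ai' f2). T b d h)"
    proof (rule sl_cong)
      fix p assume p: "p \<in> set (coev sA)"
      obtain ai ai' where pa: "p = (ai, ai')" by (cases p)
      have "M.tw X Y ai (post (N.tw X Y (gamma X ai' f2) g)) f1 =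
            (\<Sum>(b, h')\<leftarrow>psi X Y f1 ai. \<Sum>(d, h)\<leftarrow>psi X Y h' (gamma X ai' f2). T b d h)"
        unfolding M.tw_def restrict0_in[OF f1]
      proof (rule sl_cong)
        fix q assume q: "q \<in> set (psi X Y f1 ai)"
        obtain b h' where qb: "q = (b, h')" by (cases q)
        have h': "h' \<in> C X Y" using M.psi_set[OF f1 q] qb by simp
        have "act Y b (post (N.tw X Y (gamma X ai' f2) g) h') =
              act Y b (s Y (\<Sum>(d, h)\<leftarrow>psi X Y h' (gamma X ai' f2). act' Y d (g h)))"
          unfolding post_def N.tw_def using h' by simp
        also have "\<dots> = act Y b (\<Sum>(d, h)\<leftarrow>psi X Y h' (gamma X ai' f2). s Y (act' Y d (g h)))"
          using s_sum'[of "psi X Y h' (gamma X ai' f2)" "\<lambda>r. act' Y (fst r) (g (snd r))" Y]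
            aw M.psi_set[OF h'] by (simp add: case_prod_unfold)
        also have "\<dots> = (\<Sum>(d, h)\<leftarrow>psi X Y h' (gamma X ai' f2). T b d h)"
          unfolding T_def
          using M.act_sum_m[of "psi X Y h' (gamma X ai' f2)" "\<lambda>r. s Y (act' Y (fst r) (g (snd r)))" Y b]
            sw M.psi_set[OF h'] by (simp add: case_prod_unfold)
        finally show "(case q of (b, h) \<Rightarrow> act Y b (post (N.tw X Y (gamma X ai' f2) g) h)) =
            (case q of (b, h') \<Rightarrow> \<Sum>(d, h)\<leftarrow>psi X Y h' (gamma X ai' f2). T b d h)"
          using qb by simp
      qed
      then show "(case p of (ai, ai') \<Rightarrow> M.tw X Y ai (post (N.tw X Y (gamma X ai' f2) g)) f1) =
          (case p of (ai, ai') \<Rightarrow> \<Sum>(b, h')\<leftarrow>psi X Y f1 ai. \<Sum>(d, h)\<leftarrow>psi X Y h' (gamma X ai' f2). T b d h)"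
        using pa by simp
    qed
    finally show ?thesis .
  qed
  have l3: "\<forall>u\<in>UNIV. \<forall>v\<in>UNIV. \<forall>w\<in>C X Y. \<forall>w'\<in>C X Y. T u v (w + w') = T u v w + T u v w'"
    unfolding T_def using LHom_add[OF g] N.act_add_m[OF gw gw] s_add'[OF aw aw] M.act_add_m[OF sw sw]
    by simp
  have h3: "\<forall>u\<in>UNIV. \<forall>v\<in>UNIV. \<forall>w\<in>C X Y. \<forall>c. T u v (sC c w) = sM c (T u v w)"
    unfolding T_def using LHom_scale[OF g] N.act_scale_m[OF gw] s_scale'[OF aw] M.act_scale_m[OF sw]
    by simp
  have l2: "\<forall>u\<in>UNIV. \<forall>v\<in>UNIV. \<forall>v'\<in>UNIV. \<forall>w\<in>C X Y. T u (v + v') w = T u v w + T u v' w"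
    unfolding T_def using N.act_add_a[OF gw] s_add'[OF aw aw] M.act_add_m[OF sw sw]
    by simp
  have h2: "\<forall>u\<in>UNIV. \<forall>v\<in>UNIV. \<forall>w\<in>C X Y. \<forall>c. T u (sA c v) w = sM c (T u v w)"
    unfolding T_def using N.act_scale_a[OF gw] s_scale'[OF aw] M.act_scale_m[OF sw]
    by simp
  have l1: "\<forall>u\<in>UNIV. \<forall>u'\<in>UNIV. \<forall>v\<in>UNIV. \<forall>w\<in>C X Y. T (u + u') v w = T u v w + T u' v w"
    unfolding T_def using M.act_add_a[OF sw] by simp
  have h1: "\<forall>u\<in>UNIV. \<forall>v\<in>UNIV. \<forall>w\<in>C X Y. \<forall>c. T (sA c u) v w = sM c (T u v w)"
    unfolding T_def using M.act_scale_a[OF sw] by simp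
  have lhs_val: "(\<Sum>(f1, f2)\<leftarrow>delta X X Y f. H f2 f1) =
        (\<Sum>(ai, ai')\<leftarrow>coev sA. \<Sum>(f1, f2)\<leftarrow>delta X Y Y f. T ai (gamma Y ai' f1) f2)"
    if f: "f \<in> C X Y" for f
  proof -
    have "(\<Sum>(f1, f2)\<leftarrow>delta X X Y f. H f2 f1) =
          (\<Sum>(f1, f2)\<leftarrow>delta X X Y f. \<Sum>(ai, ai')\<leftarrow>coev sA. \<Sum>(b, h')\<leftarrow>psi X Y f1 ai.
              \<Sum>(d, h)\<leftarrow>psi X Y h' (gamma X ai' f2). T b d h)"
      by (rule sl_cong) (use HT M.delta_set[OF f] in \<open>auto split: prod.splits\<close>)
    also have "\<dots> = (\<Sum>(b, d, h)\<leftarrow>[(b, d, h). (f1, f2) \<leftarrow> delta X X Y f, (ai, ai') \<leftarrow> coev sA,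
                      (b, g) \<leftarrow> psi X Y f1 ai, (d, h) \<leftarrow> psi X Y g (gamma X ai' f2)]. T b d h)"
      by (simp add: case_prod_unfold comp_def map_concat sum_list_concat')
    also have "\<dots> = (\<Sum>(b, d, h)\<leftarrow>[(ai, gamma Y ai' f1, f2). (ai, ai') \<leftarrow> coev sA, (f1, f2) \<leftarrow> delta X Y Y f]. T b d h)"
      by (rule teq3_vec[OF M.coint1[OF f] M.vsM l3 h3 l2 h2 l1 h1])
    also have "\<dots> = (\<Sum>(ai, ai')\<leftarrow>coev sA. \<Sum>(f1, f2)\<leftarrow>delta X Y Y f. T ai (gamma Y ai' f1) f2)"
      by (simp add: case_prod_unfold comp_def map_concat sum_list_concat')
    finally show ?thesis .
  qed
  define K where "K = restrict0 (C X Y) (\<lambda>f. avg s Y (g f))"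
  have K_LHom: "K \<in> LHom sC (fscale sM) (C X Y) (LHom sC sM (C Y Y) (M Y))"
    unfolding K_def by (rule LHom_restrict0[OF lin_on_comp[OF LHom_lin[OF g] avg_lin'] M.C_add M.C_scale])
  have rhs_val: "(\<Sum>(f1, f2)\<leftarrow>delta X Y Y f. K f2 f1) =
        (\<Sum>(ai, ai')\<leftarrow>coev sA. \<Sum>(f1, f2)\<leftarrow>delta X Y Y f. T ai (gamma Y ai' f1) f2)"
    if f: "f \<in> C X Y" for f
  proof -
    have "(\<Sum>(f1, f2)\<leftarrow>delta X Y Y f. K f2 f1) =
          (\<Sum>(f1, f2)\<leftarrow>delta X Y Y f. \<Sum>(ai, ai')\<leftarrow>coev sA. T ai (gamma Y ai' f1) f2)"
    proof (rule sl_cong)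
      fix p assume p: "p \<in> set (delta X Y Y f)"
      obtain f1 f2 where pf: "p = (f1, f2)" by (cases p)
      have f1: "f1 \<in> C Y Y" and f2: "f2 \<in> C X Y" using M.delta_set[OF f p] pf by auto
      show "(case p of (f1, f2) \<Rightarrow> K f2 f1) =
            (case p of (f1, f2) \<Rightarrow> \<Sum>(ai, ai')\<leftarrow>coev sA. T ai (gamma Y ai' f1) f2)"
        using pf f1 f2 unfolding K_def T_def by (simp add: avg_eq)
    qed
    also have "\<dots> = (\<Sum>(ai, ai')\<leftarrow>coev sA. \<Sum>(f1, f2)\<leftarrow>delta X Y Y f. T ai (gamma Y ai' f1) f2)"
      using sum_list_swap[where f="\<lambda>p q. T (fst q) (gamma Y (snd q) (fst p)) (snd p)" and xs="delta X Y Y f" and ys="coev sA"]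
      by (simp add: case_prod_unfold)
    finally show ?thesis .
  qed
  have "tt s X (pr' X Y g) = pr X X (restrict0 (C X X) (\<lambda>f. pr X Y (H f)))"
    using tt_eq[OF p'in] step1 by simp
  also have "\<dots> = pr X Y (restrict0 (C X Y) (\<lambda>f. \<Sum>(f1, f2)\<leftarrow>delta X X Y f. H f2 f1))"
    by (rule M.pr_assoc[OF H_LHom])
  also have "\<dots> = pr X Y (restrict0 (C X Y) (\<lambda>f. \<Sum>(f1, f2)\<leftarrow>delta X Y Y f. K f2 f1))"
    using lhs_val rhs_val by (simp cong: restrict0_cong)
  also have "\<dots> = pr X Y (restrict0 (C X Y) (\<lambda>f. pr Y Y (K f)))"
    by (rule M.pr_assoc[OF K_LHom, symmetric])
  also have "\<dots> = pr X Y (restrict0 (C X Y) (\<lambda>f. tt s Y (g f)))"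
    using tt_eq[OF gw] unfolding K_def by (simp cong: restrict0_cong)
  finally show ?thesis .
qed

end

context EMNs begin

lemma tt_entwined: "entwined_morphism sC C sN N pr' act' sM M pr act (tt s)"
  unfolding entwined_morphism_def ctr_morphism_def
  using tt_LHom' tt_ctr tt_act by auto

lemma tt_section:
  assumes phi: "entwined_morphism sC C sM M pr act sN N pr' act' phi"
    and sec: "\<And>n. n \<in> N X \<Longrightarrow> phi X (s X n) = n"
    and n: "n \<in> N X"
  shows "phi X (tt s X n) = n"
proof -
  have phiLH: "phi X \<in> LHom sM sN (M X) (N X)"
    using phi unfolding entwined_morphism_def ctr_morphism_def by auto
  have phictr: "phi X (pr X X g) = pr' X X (restrict0 (C X X) (\<lambda>f. phi X (g f)))"
    if "g \<in> LHom sC sM (C X X) (M X)" for g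
    using phi that unfolding entwined_morphism_def ctr_morphism_def by auto
  have phiact: "phi X (act X a m) = act' X a (phi X m)" if "m \<in> M X" for a m
    using phi that unfolding entwined_morphism_def by auto
  have "phi X (avg s X n f) = sN (eps X f) n" if f: "f \<in> C X X" for f
  proof -
    have inM: "act X ai (s X (act' X (gamma X ai' f) n)) \<in> M X" for ai ai'
      using M.act_in s_in' N.act_in n by blast
    have "phi X (avg s X n f) = (\<Sum>(ai, ai')\<leftarrow>coev sA. phi X (act X ai (s X (act' X (gamma X ai' f) n))))"
      unfolding avg_eq[OF f]
      using additive_sum_list[of "M X" "phi X" "coev sA" "\<lambda>p. act X (fst p) (s X (act' X (gamma X (snd p) f) n))"]
        LHom_add[OF phiLH] M.M_zero M.M_add inM
      by (simp add: case_prod_unfold)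
    also have "\<dots> = (\<Sum>(ai, ai')\<leftarrow>coev sA. act' X ai (act' X (gamma X ai' f) n))"
      using phiact s_in' N.act_in[OF n] sec[OF N.act_in[OF n]] by (simp add: case_prod_unfold)
    also have "\<dots> = sN (eps X f) n" by (rule N.EM_eps[OF n f])
    finally show ?thesis .
  qed
  then have "restrict0 (C X X) (\<lambda>f. phi X (avg s X n f)) = restrict0 (C X X) (\<lambda>f. sN (eps X f) n)"
    by (rule restrict0_cong)
  then show ?thesis
    using tt_eq[OF n] phictr[OF avg_LHom'[OF n]] N.pr_counit[OF n] by simp
qed

lemma tt_retraction:
  assumes phi: "entwined_morphism sC C sM M pr act sN N pr' act' phi"
    and ret: "\<And>m. m \<in> M X \<Longrightarrow> s X (phi X m) = m"
    and m: "m \<in> M X"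
  shows "tt s X (phi X m) = m"
proof -
  have phiLH: "phi X \<in> LHom sM sN (M X) (N X)"
    using phi unfolding entwined_morphism_def ctr_morphism_def by auto
  have phiact: "phi X (act X a m) = act' X a (phi X m)" if "m \<in> M X" for a m
    using phi that unfolding entwined_morphism_def by auto
  have pm: "phi X m \<in> N X" using LHom_in[OF phiLH m] .
  have "avg s X (phi X m) = restrict0 (C X X) (\<lambda>f. sM (eps X f) m)"
    unfolding avg_def
  proof (rule restrict0_cong)
    fix f assume f: "f \<in> C X X"
    have "(\<Sum>(ai, ai')\<leftarrow>coev sA. act X ai (s X (act' X (gamma X ai' f) (phi X m)))) =
          (\<Sum>(ai, ai')\<leftarrow>coev sA. act X ai (act X (gamma X ai' f) m))"
      using phiact[OF m, symmetric] ret M.act_in[OF m] by (simp add: case_prod_unfold)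
    also have "\<dots> = sM (eps X f) m" by (rule M.EM_eps[OF m f])
    finally show "(\<Sum>(ai, ai')\<leftarrow>coev sA. act X ai (s X (act' X (gamma X ai' f) (phi X m)))) = sM (eps X f) m" .
  qed
  then show ?thesis using tt_eq[OF pm] M.pr_counit[OF m] by simp
qed

end

theorem proposition7p4:
  fixes sC :: "'k::field \<Rightarrow> 'c::ab_group_add \<Rightarrow> 'c"
    and C :: "'o \<Rightarrow> 'o \<Rightarrow> 'c set"
    and delta :: "'o \<Rightarrow> 'o \<Rightarrow> 'o \<Rightarrow> 'c \<Rightarrow> ('c \<times> 'c) list"
    and eps :: "'o \<Rightarrow> 'c \<Rightarrow> 'k"
    and sA :: "'k \<Rightarrow> 'a::ring_1 \<Rightarrow> 'a"
    and psi :: "'o \<Rightarrow> 'o \<Rightarrow> 'c \<Rightarrow> 'a \<Rightarrow> ('a \<times> 'c) list"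
    and gamma :: "'o \<Rightarrow> ('a \<Rightarrow> 'k) \<Rightarrow> 'c \<Rightarrow> 'a"
    and sM :: "'k \<Rightarrow> 'm::ab_group_add \<Rightarrow> 'm" and M :: "'o \<Rightarrow> 'm set"
    and pr :: "'o \<Rightarrow> 'o \<Rightarrow> ('c \<Rightarrow> 'm) \<Rightarrow> 'm" and act :: "'o \<Rightarrow> 'a \<Rightarrow> 'm \<Rightarrow> 'm"
    and sN :: "'k \<Rightarrow> 'n::ab_group_add \<Rightarrow> 'n" and N :: "'o \<Rightarrow> 'n set"
    and pr' :: "'o \<Rightarrow> 'o \<Rightarrow> ('c \<Rightarrow> 'n) \<Rightarrow> 'n" and act' :: "'o \<Rightarrow> 'a \<Rightarrow> 'n \<Rightarrow> 'n"
    and phi :: "'o \<Rightarrow> 'm \<Rightarrow> 'n"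
  assumes ent: "entwining sC C delta eps sA psi"
    and fd: "findim sA"
    and coint: "normalized_cointegral sC C delta eps sA psi gamma"
    and M: "entwined_contramodule sC C delta eps sA psi sM M pr act"
    and N: "entwined_contramodule sC C delta eps sA psi sN N pr' act'"
    and phi: "entwined_morphism sC C sM M pr act sN N pr' act' phi"
  shows "((\<exists>s. entwined_morphism sC C sN N pr' act' sM M pr act s \<and>
              (\<forall>X. \<forall>n\<in>N X. phi X (s X n) = n))
          \<longleftrightarrow> (\<exists>s. ctr_morphism sC C sN N pr' sM M pr s \<and>
              (\<forall>X. \<forall>n\<in>N X. phi X (s X n) = n)))
       \<and> ((\<exists>r. entwined_morphism sC C sN N pr' act' sM M pr act r \<and>
              (\<forall>X. \<forall>m\<in>M X. r X (phi X m) = m))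
          \<longleftrightarrow> (\<exists>r. ctr_morphism sC C sN N pr' sM M pr r \<and>
              (\<forall>X. \<forall>m\<in>M X. r X (phi X m) = m)))"
proof -
  have emns: "EMNs sC C delta eps sA psi gamma sM M pr act sN N pr' act' s"
    if "ctr_morphism sC C sN N pr' sM M pr s" for s
    using that ent fd coint M N
    unfolding EMNs_def EMNs_axioms_def EMN_def EM_def EM_axioms_def ES_def ctr_morphism_def
    by auto
  show ?thesis
  proof (intro conjI iffI)
    assume "\<exists>s. entwined_morphism sC C sN N pr' act' sM M pr act s \<and> (\<forall>X. \<forall>n\<in>N X. phi X (s X n) = n)"
    then show "\<exists>s. ctr_morphism sC C sN N pr' sM M pr s \<and> (\<forall>X. \<forall>n\<in>N X. phi X (s X n) = n)"
      unfolding entwined_morphism_def by blast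
  next
    assume "\<exists>s. ctr_morphism sC C sN N pr' sM M pr s \<and> (\<forall>X. \<forall>n\<in>N X. phi X (s X n) = n)"
    then obtain s where s: "ctr_morphism sC C sN N pr' sM M pr s" and sec: "\<forall>X. \<forall>n\<in>N X. phi X (s X n) = n"
      by blast
    interpret EMNs sC C delta eps sA psi gamma sM M pr act sN N pr' act' s by (rule emns[OF s])
    show "\<exists>s. entwined_morphism sC C sN N pr' act' sM M pr act s \<and> (\<forall>X. \<forall>n\<in>N X. phi X (s X n) = n)"
      using tt_entwined tt_section[OF phi] sec by blast
  next
    assume "\<exists>r. entwined_morphism sC C sN N pr' act' sM M pr act r \<and> (\<forall>X. \<forall>m\<in>M X. r X (phi X m) = m)"
    then show "\<exists>r. ctr_morphism sC C sN N pr' sM M pr r \<and> (\<forall>X. \<forall>m\<in>M X. r X (phi X m) = m)"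
      unfolding entwined_morphism_def by blast
  next
    assume "\<exists>r. ctr_morphism sC C sN N pr' sM M pr r \<and> (\<forall>X. \<forall>m\<in>M X. r X (phi X m) = m)"
    then obtain s where s: "ctr_morphism sC C sN N pr' sM M pr s" and ret: "\<forall>X. \<forall>m\<in>M X. s X (phi X m) = m"
      by blast
    interpret EMNs sC C delta eps sA psi gamma sM M pr act sN N pr' act' s by (rule emns[OF s])
    show "\<exists>r. entwined_morphism sC C sN N pr' act' sM M pr act r \<and> (\<forall>X. \<forall>m\<in>M X. r X (phi X m) = m)"
      using tt_entwined tt_retraction[OF phi] ret by blast
  qed
qed

end
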